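(* There is an absolute constant $c>0$ such that the following holds for every graph $G$, label set $\chi$ with $d\ge2$, cost vector $C$ and $\epsilon>0$. Set $\eta=\frac{4(m+n)\log d}{\epsilon}$ and let $K\ge c\, m d^2(m+n)^4\|C\|_\infty^3\epsilon^{-3}\log d$. Let $\hat\lambda$ be the output of the randomized message passing procedure run for $K$ iterations with the EMP update and block distribution uniform over $\{(e,i):e\in E,i\in e\}$, and let $\hat\mu=\mathrm{Proj}(\mu^{\hat\lambda})$. Then $\hat\mu\in\mathbb{L}_2$ and $$\mathbb{E}\,\langle C,\hat\mu\rangle\le\min_{\mu\in\mathbb{L}_2}\langle C,\mu\rangle+\epsilon.$$ The same conclusion holds if instead the procedure uses the SMP update with vertex $i$ sampled with probability $p_i=|N_i|/\sum_{j\in V}|N_j|$.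
   Context: Let $G=(V,E)$ be a finite undirected graph with $n=|V|$, $m=|E|$, every vertex incident to at least one edge; $N_i=\{e\in E:i\in e\}$. $\chi$ is a finite label set with $d=|\chi|\ge2$. Costs $C_i\in\mathbb{R}^\chi$, $C_e\in\mathbb{R}^{\chi^2}$; $\|C\|_\infty$ is the largest absolute entry; for $e=\{i,j\}$ (with a fixed orientation), $x_e=(x_i,x_j)$ and $(x_e)_i=x_i$. $\langle C,\mu\rangle=\sum_i\sum_xC_i(x)\mu_i(x)+\sum_e\sum_{x_e}C_e(x_e)\mu_e(x_e)$. $\mathbb{L}_2=\{\mu\ge0:\mu_i\in\Sigma^d\ \forall i,\ \sum_{x_e:(x_e)_i=x}\mu_e(x_e)=\mu_i(x)\ \forall e,\,i\in e,\,x\}$, with $\Sigma^d$ the probability simplex on $\chi$. Dual variables $\lambda\in\mathbb{R}^{2md}$ indexed by $(e,i,x)$, $e\in E$, $i\in e$, $x\in\chi$. $\mu^\lambda_i(x)\propto\exp(-\eta C_i(x)+\eta\sum_{e\in N_i}\lambda_{e,i}(x))$, $\mu^\lambda_e(x_e)\propto\exp(-\eta C_e(x_e)-\eta\sum_{i\in e}\lambda_{e,i}((x_e)_i))$, each normalized to sum to $1$; $S^\lambda_{e,i}(x)=\sum_{x_e:(x_e)_i=x}\mu^\lambda_e(x_e)$; slack $\nu^\lambda_{e,i}=S^\lambda_{e,i}-\mu^\lambda_i$. EMP update at block $(e,i)$: replace $\lambda_{e,i}(x)$ by $\lambda_{e,i}(x)+\frac{1}{2\eta}\log(S^\lambda_{e,i}(x)/\mu^\lambda_i(x))$.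 SMP update at vertex $i$: for each $e\in N_i$ replace $\lambda_{e,i}(x)$ by $\lambda_{e,i}(x)+\frac1\eta\log S^\lambda_{e,i}(x)-\frac{1}{\eta(|N_i|+1)}\log(\mu^\lambda_i(x)\prod_{e'\in N_i}S^\lambda_{e',i}(x))$. Randomized message passing procedure: $\lambda^{(0)}=0$; for $k=0,\dots,K-1$, sample a block $b_k$ independently from the given distribution and let $\lambda^{(k+1)}$ be $\lambda^{(k)}$ with block $b_k$ updated by the update rule evaluated at $\lambda^{(k)}$; output $\hat\lambda\in\arg\min_{\lambda\in\{\lambda^{(0)},\dots,\lambda^{(K)}\}}\sum_{e\in E,i\in e}\|\nu^\lambda_{e,i}\|_1^2$. Rounding map: for $F\in\mathbb{R}_{>0}^{\chi\times\chi}$ and $r,c\in\Sigma^d$, with $r(F),c(F)$ the row/column sums, let $F'=\mathrm{diag}(a)F$ with $a(x)=\min\{r(x)/r(F)(x),1\}$, $F''=F'\mathrm{diag}(b)$ with $b(x)=\min\{c(x)/c(F')(x),1\}$, $\mathrm{err}_r=r-r(F'')$, $\mathrm{err}_c=c-c(F'')$, and output $F''+\mathrm{err}_r\mathrm{err}_c^\top/\|\mathrm{err}_c\|_1$ (or $F''$ if $\mathrm{err}_c=0$). $\mathrm{Proj}(\mu^\lambda)$ is the vector $\hat\mu$ with $\hat\mu_i=\mu^\lambda_i$ for $i\in V$ and, for $e=\{i,j\}$, $\hat\mu_e$ the rounding of $\mu^\lambda_e$ (rows indexed by $x_i$, columns by $x_j$) with $r=\mu^\lambda_i$, $c=\mu^\lambda_j$.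 Expectation is over the random block choices. *)

theory Defs
  imports "HOL-Probability.Probability"
begin

text \<open>Vertices and labels are natural numbers (concrete types, so that the
constant c in the main theorem is genuinely absolute). V is the vertex set, X the label
set chi (d = card X), and E the set of edges, each undirected edge {i,j} stored once with
a fixed orientation as a pair (i,j). Dual variables lam e i x are indexed by an edge,
one of its endpoints, and a label.\<close>

type_synonym edge = "nat \<times> nat"
type_synonym dual = "edge \<Rightarrow> nat \<Rightarrow> nat \<Rightarrow> real"

definition ends :: "edge \<Rightarrow> nat set" where
  "ends e = {fst e, snd e}"

definition nbr :: "edge set \<Rightarrow> nat \<Rightarrow> edge set" where
  "nbr E i = {e \<in> E. i \<in> ends e}"

definition graph :: "nat set \<Rightarrow> edge set \<Rightarrow> bool" where
  "graph V E \<longleftrightarrow> finite V \<and> V \<noteq> {} \<and> finite E \<and> E \<subseteq> V \<times> V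
     \<and> (\<forall>e\<in>E. fst e \<noteq> snd e) \<and> (\<forall>a b. (a, b) \<in> E \<longrightarrow> (b, a) \<notin> E)
     \<and> (\<forall>i\<in>V. nbr E i \<noteq> {})"

definition Cnorm :: "nat set \<Rightarrow> edge set \<Rightarrow> nat set \<Rightarrow> (nat \<Rightarrow> nat \<Rightarrow> real)
    \<Rightarrow> (edge \<Rightarrow> nat \<Rightarrow> nat \<Rightarrow> real) \<Rightarrow> real" where
  "Cnorm V E X Cv Ce = Max ({\<bar>Cv i x\<bar> | i x. i \<in> V \<and> x \<in> X}
                            \<union> {\<bar>Ce e x y\<bar> | e x y. e \<in> E \<and> x \<in> X \<and> y \<in> X})"

definition wV :: "edge set \<Rightarrow> (nat \<Rightarrow> nat \<Rightarrow> real) \<Rightarrow> real \<Rightarrow> dual \<Rightarrow> nat \<Rightarrow> nat \<Rightarrow> real" where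
  "wV E Cv \<eta> lam i x = exp (- \<eta> * Cv i x + \<eta> * (\<Sum>e\<in>nbr E i. lam e i x))"

definition muV :: "edge set \<Rightarrow> nat set \<Rightarrow> (nat \<Rightarrow> nat \<Rightarrow> real) \<Rightarrow> real \<Rightarrow> dual \<Rightarrow> nat \<Rightarrow> nat \<Rightarrow> real" where
  "muV E X Cv \<eta> lam i x = wV E Cv \<eta> lam i x / (\<Sum>y\<in>X. wV E Cv \<eta> lam i y)"

definition wE :: "(edge \<Rightarrow> nat \<Rightarrow> nat \<Rightarrow> real) \<Rightarrow> real \<Rightarrow> dual \<Rightarrow> edge \<Rightarrow> nat \<Rightarrow> nat \<Rightarrow> real" where
  "wE Ce \<eta> lam e x y = exp (- \<eta> * Ce e x y - \<eta> * (lam e (fst e) x + lam e (snd e) y))"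

text \<open>muE lam e x y: rows indexed by the label of fst e, columns by the label of snd e.\<close>
definition muE :: "nat set \<Rightarrow> (edge \<Rightarrow> nat \<Rightarrow> nat \<Rightarrow> real) \<Rightarrow> real \<Rightarrow> dual \<Rightarrow> edge \<Rightarrow> nat \<Rightarrow> nat \<Rightarrow> real" where
  "muE X Ce \<eta> lam e x y = wE Ce \<eta> lam e x y / (\<Sum>p\<in>X \<times> X. wE Ce \<eta> lam e (fst p) (snd p))"

definition Smarg :: "nat set \<Rightarrow> (edge \<Rightarrow> nat \<Rightarrow> nat \<Rightarrow> real) \<Rightarrow> real \<Rightarrow> dual \<Rightarrow> edge \<Rightarrow> nat \<Rightarrow> nat \<Rightarrow> real" where
  "Smarg X Ce \<eta> lam e i x =
     (if i = fst e then (\<Sum>y\<in>X. muE X Ce \<eta> lam e x y) else (\<Sum>y\<in>X. muE X Ce \<eta> lam e y x))"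

definition slack :: "edge set \<Rightarrow> nat set \<Rightarrow> (nat \<Rightarrow> nat \<Rightarrow> real) \<Rightarrow> (edge \<Rightarrow> nat \<Rightarrow> nat \<Rightarrow> real)
    \<Rightarrow> real \<Rightarrow> dual \<Rightarrow> edge \<Rightarrow> nat \<Rightarrow> nat \<Rightarrow> real" where
  "slack E X Cv Ce \<eta> lam e i x = Smarg X Ce \<eta> lam e i x - muV E X Cv \<eta> lam i x"

definition slack_obj :: "edge set \<Rightarrow> nat set \<Rightarrow> (nat \<Rightarrow> nat \<Rightarrow> real) \<Rightarrow> (edge \<Rightarrow> nat \<Rightarrow> nat \<Rightarrow> real)
    \<Rightarrow> real \<Rightarrow> dual \<Rightarrow> real" where
  "slack_obj E X Cv Ce \<eta> lam =
     (\<Sum>e\<in>E. \<Sum>i\<in>ends e. (\<Sum>x\<in>X. \<bar>slack E X Cv Ce \<eta> lam e i x\<bar>)\<^sup>2)"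

definition emp_update :: "edge set \<Rightarrow> nat set \<Rightarrow> (nat \<Rightarrow> nat \<Rightarrow> real) \<Rightarrow> (edge \<Rightarrow> nat \<Rightarrow> nat \<Rightarrow> real)
    \<Rightarrow> real \<Rightarrow> edge \<times> nat \<Rightarrow> dual \<Rightarrow> dual" where
  "emp_update E X Cv Ce \<eta> b lam =
     (let e = fst b; i = snd b in
      lam(e := (lam e)(i := (\<lambda>x. lam e i x
          + 1 / (2 * \<eta>) * ln (Smarg X Ce \<eta> lam e i x / muV E X Cv \<eta> lam i x)))))"

definition smp_update :: "edge set \<Rightarrow> nat set \<Rightarrow> (nat \<Rightarrow> nat \<Rightarrow> real) \<Rightarrow> (edge \<Rightarrow> nat \<Rightarrow> nat \<Rightarrow> real)
    \<Rightarrow> real \<Rightarrow> nat \<Rightarrow> dual \<Rightarrow> dual" where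
  "smp_update E X Cv Ce \<eta> i lam =
     (\<lambda>e j x. if e \<in> nbr E i \<and> j = i
        then lam e i x + 1 / \<eta> * ln (Smarg X Ce \<eta> lam e i x)
             - 1 / (\<eta> * (real (card (nbr E i)) + 1))
               * ln (muV E X Cv \<eta> lam i x * (\<Prod>e'\<in>nbr E i. Smarg X Ce \<eta> lam e' i x))
        else lam e j x)"

definition run :: "('b \<Rightarrow> dual \<Rightarrow> dual) \<Rightarrow> 'b list \<Rightarrow> nat \<Rightarrow> dual" where
  "run upd bs k = foldl (\<lambda>lam b. upd b lam) (\<lambda>_ _ _. 0) (take k bs)"

fun seq_pmf :: "nat \<Rightarrow> 'b pmf \<Rightarrow> 'b list pmf" where
  "seq_pmf 0 p = return_pmf []"
| "seq_pmf (Suc k) p = bind_pmf p (\<lambda>b. map_pmf (\<lambda>bs. b # bs) (seq_pmf k p))"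

definition round_map :: "nat set \<Rightarrow> (nat \<Rightarrow> nat \<Rightarrow> real) \<Rightarrow> (nat \<Rightarrow> real) \<Rightarrow> (nat \<Rightarrow> real)
    \<Rightarrow> nat \<Rightarrow> nat \<Rightarrow> real" where
  "round_map X F r c =
    (let a = (\<lambda>x. min (r x / (\<Sum>y\<in>X. F x y)) 1);
         F1 = (\<lambda>x y. a x * F x y);
         b = (\<lambda>y. min (c y / (\<Sum>x\<in>X. F1 x y)) 1);
         F2 = (\<lambda>x y. F1 x y * b y);
         err_r = (\<lambda>x. r x - (\<Sum>y\<in>X. F2 x y));
         err_c = (\<lambda>y. c y - (\<Sum>x\<in>X. F2 x y))
     in if (\<forall>y\<in>X. err_c y = 0) then F2
        else (\<lambda>x y. F2 x y + err_r x * err_c y / (\<Sum>z\<in>X. \<bar>err_c z\<bar>)))"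

type_synonym pseudo = "(nat \<Rightarrow> nat \<Rightarrow> real) \<times> (edge \<Rightarrow> nat \<Rightarrow> nat \<Rightarrow> real)"

definition Proj :: "edge set \<Rightarrow> nat set \<Rightarrow> (nat \<Rightarrow> nat \<Rightarrow> real) \<Rightarrow> (edge \<Rightarrow> nat \<Rightarrow> nat \<Rightarrow> real)
    \<Rightarrow> real \<Rightarrow> dual \<Rightarrow> pseudo" where
  "Proj E X Cv Ce \<eta> lam =
     (muV E X Cv \<eta> lam,
      \<lambda>e. round_map X (muE X Ce \<eta> lam e) (muV E X Cv \<eta> lam (fst e)) (muV E X Cv \<eta> lam (snd e)))"

text \<open>Local marginal polytope L_2 (only the values on V, E, X are constrained).\<close>
definition L2 :: "nat set \<Rightarrow> edge set \<Rightarrow> nat set \<Rightarrow> pseudo set" where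
  "L2 V E X = {(mv, me).
      (\<forall>i\<in>V. \<forall>x\<in>X. mv i x \<ge> 0) \<and> (\<forall>e\<in>E. \<forall>x\<in>X. \<forall>y\<in>X. me e x y \<ge> 0)
    \<and> (\<forall>i\<in>V. (\<Sum>x\<in>X. mv i x) = 1)
    \<and> (\<forall>e\<in>E. \<forall>x\<in>X. (\<Sum>y\<in>X. me e x y) = mv (fst e) x)
    \<and> (\<forall>e\<in>E. \<forall>y\<in>X. (\<Sum>x\<in>X. me e x y) = mv (snd e) y)}"

definition cost :: "nat set \<Rightarrow> edge set \<Rightarrow> nat set \<Rightarrow> (nat \<Rightarrow> nat \<Rightarrow> real) \<Rightarrow> (edge \<Rightarrow> nat \<Rightarrow> nat \<Rightarrow> real)
    \<Rightarrow> pseudo \<Rightarrow> real" where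
  "cost V E X Cv Ce mu =
     (\<Sum>i\<in>V. \<Sum>x\<in>X. Cv i x * fst mu i x) + (\<Sum>e\<in>E. \<Sum>x\<in>X. \<Sum>y\<in>X. Ce e x y * snd mu e x y)"

definition emp_blocks :: "edge set \<Rightarrow> (edge \<times> nat) pmf" where
  "emp_blocks E = pmf_of_set {(e, i). e \<in> E \<and> i \<in> ends e}"

definition smp_blocks :: "nat set \<Rightarrow> edge set \<Rightarrow> nat pmf" where
  "smp_blocks V E = embed_pmf (\<lambda>i. if i \<in> V
       then real (card (nbr E i)) / (\<Sum>j\<in>V. real (card (nbr E j))) else 0)"

text \<open>Guarantee for the randomized procedure with update upd and block distribution p,
run for K iterations, for every admissible argmin selection sel.\<close>
definition rmp_guarantee :: "nat set \<Rightarrow> edge set \<Rightarrow> nat set \<Rightarrow> (nat \<Rightarrow> nat \<Rightarrow> real)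
    \<Rightarrow> (edge \<Rightarrow> nat \<Rightarrow> nat \<Rightarrow> real) \<Rightarrow> real \<Rightarrow> real \<Rightarrow> nat
    \<Rightarrow> ('b \<Rightarrow> dual \<Rightarrow> dual) \<Rightarrow> 'b pmf \<Rightarrow> bool" where
  "rmp_guarantee V E X Cv Ce \<eta> \<epsilon> K upd p \<longleftrightarrow>
     (\<forall>sel :: 'b list \<Rightarrow> nat.
        (\<forall>bs. sel bs \<le> K \<and> (\<forall>k\<le>K. slack_obj E X Cv Ce \<eta> (run upd bs (sel bs))
                                     \<le> slack_obj E X Cv Ce \<eta> (run upd bs k)))
        \<longrightarrow> (\<forall>bs\<in>set_pmf (seq_pmf K p). Proj E X Cv Ce \<eta> (run upd bs (sel bs)) \<in> L2 V E X)
          \<and> (\<forall>mu\<in>L2 V E X.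
               measure_pmf.expectation (seq_pmf K p)
                 (\<lambda>bs. cost V E X Cv Ce (Proj E X Cv Ce \<eta> (run upd bs (sel bs))))
               \<le> cost V E X Cv Ce mu + \<epsilon>))"

end

theory Submission
  imports Defs
begin

lemma gibbs:
  fixes p w :: "'a \<Rightarrow> real"
  assumes fin: "finite A" and p0: "\<And>a. a \<in> A \<Longrightarrow> p a \<ge> 0" and p1: "sum p A = 1"
    and w0: "\<And>a. a \<in> A \<Longrightarrow> w a > 0"
  shows "(\<Sum>a\<in>A. p a * ln (w a)) - (\<Sum>a\<in>A. p a * ln (p a)) \<le> ln (sum w A)"
proof -
  have Ane: "A \<noteq> {}" using p1 by auto
  define Z where "Z = sum w A"
  have Z0: "Z > 0" unfolding Z_def using fin Ane w0 by (simp add: sum_pos)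
  have key: "p a * ln (w a) - p a * ln (p a) \<le> w a / Z - p a + p a * ln Z" if a: "a \<in> A" for a
  proof (cases "p a = 0")
    case True thus ?thesis using w0[OF a] Z0 by simp
  next
    case False
    hence pa: "p a > 0" using p0[OF a] by simp
    have "ln (w a / (p a * Z)) \<le> w a / (p a * Z) - 1"
      using pa Z0 w0[OF a] by (intro ln_le_minus_one) simp
    hence "p a * ln (w a / (p a * Z)) \<le> p a * (w a / (p a * Z) - 1)"
      using pa by (simp add: mult_left_mono)
    moreover have "ln (w a / (p a * Z)) = ln (w a) - ln (p a) - ln Z"
      using pa Z0 w0[OF a] by (simp add: ln_div ln_mult)
    moreover have "p a * (w a / (p a * Z) - 1) = w a / Z - p a"
      using pa Z0 by (simp add: field_simps)
    ultimately have "p a * (ln (w a) - ln (p a) - ln Z) \<le> w a / Z - p a" by simp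
    thus ?thesis by (simp add: algebra_simps)
  qed
  have "(\<Sum>a\<in>A. p a * ln (w a)) - (\<Sum>a\<in>A. p a * ln (p a)) = (\<Sum>a\<in>A. p a * ln (w a) - p a * ln (p a))"
    by (simp add: sum_subtractf)
  also have "\<dots> \<le> (\<Sum>a\<in>A. w a / Z - p a + p a * ln Z)"
    by (rule sum_mono) (rule key)
  also have "\<dots> = sum w A / Z - sum p A + sum p A * ln Z"
    by (simp add: sum.distrib sum_subtractf sum_divide_distrib sum_distrib_right)
  also have "\<dots> = ln Z" using Z0 p1 by (simp add: Z_def)
  finally show ?thesis by (simp add: Z_def)
qed

lemma gibbs_eq:
  fixes w :: "'a \<Rightarrow> real"
  assumes fin: "finite A" and w0: "\<And>a. a \<in> A \<Longrightarrow> w a > 0" and Ane: "A \<noteq> {}"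
  defines "p \<equiv> \<lambda>a. w a / sum w A"
  shows "(\<Sum>a\<in>A. p a * ln (w a)) - (\<Sum>a\<in>A. p a * ln (p a)) = ln (sum w A)"
proof -
  define Z where "Z = sum w A"
  have Z0: "Z > 0" unfolding Z_def using fin Ane w0 by (simp add: sum_pos)
  have "(\<Sum>a\<in>A. p a * ln (w a)) - (\<Sum>a\<in>A. p a * ln (p a)) = (\<Sum>a\<in>A. p a * ln Z)"
    unfolding sum_subtractf[symmetric]
    by (rule sum.cong) (use Z0 w0 in \<open>auto simp: p_def Z_def[symmetric] ln_div field_simps\<close>)
  also have "\<dots> = (\<Sum>a\<in>A. p a) * ln Z" by (simp add: sum_distrib_right)
  also have "(\<Sum>a\<in>A. p a) = 1" using Z0 by (simp add: p_def Z_def[symmetric] sum_divide_distrib[symmetric])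
  finally show ?thesis by (simp add: Z_def)
qed

lemma entropy_le:
  fixes p :: "'a \<Rightarrow> real"
  assumes fin: "finite A" and p0: "\<And>a. a \<in> A \<Longrightarrow> p a \<ge> 0" and p1: "sum p A = 1"
  shows "- (\<Sum>a\<in>A. p a * ln (p a)) \<le> ln (real (card A))"
  using gibbs[OF fin p0 p1, of "\<lambda>_. 1"] by simp

lemma plnp_nonpos: "0 \<le> (p::real) \<Longrightarrow> p \<le> 1 \<Longrightarrow> p * ln p \<le> 0"
  by (cases "p = 0") (auto simp: mult_nonneg_nonpos)

lemma hellinger:
  fixes S m :: "'a \<Rightarrow> real"
  assumes fin: "finite A" and S0: "\<And>a. a \<in> A \<Longrightarrow> S a \<ge> 0" and m0: "\<And>a. a \<in> A \<Longrightarrow> m a \<ge> 0"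
    and S1: "sum S A = 1" and m1: "sum m A = 1"
  shows "(\<Sum>a\<in>A. \<bar>S a - m a\<bar>)\<^sup>2 \<le> 8 * (1 - (\<Sum>a\<in>A. sqrt (S a * m a)))"
proof -
  define BC where "BC = (\<Sum>a\<in>A. sqrt (S a * m a))"
  have e1: "\<bar>S a - m a\<bar> = \<bar>sqrt (S a) - sqrt (m a)\<bar> * (sqrt (S a) + sqrt (m a))" if "a \<in> A" for a
  proof -
    have "S a - m a = (sqrt (S a) - sqrt (m a)) * (sqrt (S a) + sqrt (m a))"
      using S0[OF that] m0[OF that] by (simp add: algebra_simps)
    moreover have "\<bar>sqrt (S a) + sqrt (m a)\<bar> = sqrt (S a) + sqrt (m a)"
      using S0[OF that] m0[OF that] by (intro abs_of_nonneg add_nonneg_nonneg) auto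
    ultimately show ?thesis by (metis abs_mult)
  qed
  have sq1: "(sqrt (S a) - sqrt (m a))\<^sup>2 = S a + m a - 2 * sqrt (S a * m a)" if "a \<in> A" for a
    using S0[OF that] m0[OF that] by (simp add: power2_eq_square algebra_simps real_sqrt_mult)
  have sq2: "(sqrt (S a) + sqrt (m a))\<^sup>2 = S a + m a + 2 * sqrt (S a * m a)" if "a \<in> A" for a
    using S0[OF that] m0[OF that] by (simp add: power2_eq_square algebra_simps real_sqrt_mult)
  have h1: "(\<Sum>a\<in>A. (sqrt (S a) - sqrt (m a))\<^sup>2) = 2 - 2 * BC"
    using sq1 S1 m1 by (simp add: BC_def sum.distrib sum_subtractf sum_distrib_left)
  have h2: "(\<Sum>a\<in>A. (sqrt (S a) + sqrt (m a))\<^sup>2) = 2 + 2 * BC"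
    using sq2 S1 m1 by (simp add: BC_def sum.distrib sum_distrib_left)
  have h1p: "2 - 2 * BC \<ge> 0" unfolding h1[symmetric] by (intro sum_nonneg) simp
  have "(\<Sum>a\<in>A. \<bar>S a - m a\<bar>) = (\<Sum>a\<in>A. \<bar>sqrt (S a) - sqrt (m a)\<bar> * (sqrt (S a) + sqrt (m a)))"
    using e1 by simp
  hence "(\<Sum>a\<in>A. \<bar>S a - m a\<bar>)\<^sup>2 \<le> (\<Sum>a\<in>A. \<bar>sqrt (S a) - sqrt (m a)\<bar>\<^sup>2) * (\<Sum>a\<in>A. (sqrt (S a) + sqrt (m a))\<^sup>2)"
    using Cauchy_Schwarz_ineq_sum by metis
  also have "\<dots> = (2 - 2 * BC) * (2 + 2 * BC)" using h1 h2 by simp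
  also have "\<dots> \<le> (2 - 2 * BC) * 4" using h1p h1 by (intro mult_left_mono) auto
  finally show ?thesis by (simp add: BC_def algebra_simps)
qed

lemma amgm_ln:
  fixes q :: "'a \<Rightarrow> real"
  assumes fin: "finite N" and q0: "\<And>a. a \<in> N \<Longrightarrow> q a > 0" and g0: "g > 0" and Anz: "A > 0"
    and hA: "2 * g + sum q N = (real (card N) + 2) * A"
  shows "2 * ln g + (\<Sum>a\<in>N. ln (q a)) \<le> (real (card N) + 2) * ln A"
proof -
  have l1: "ln z - ln A \<le> z / A - 1" if "z > 0" for z
  proof -
    have "ln (z / A) \<le> z / A - 1" using that Anz by (intro ln_le_minus_one) simp
    thus ?thesis using that Anz by (simp add: ln_div)
  qed
  have "2 * (ln g - ln A) + (\<Sum>a\<in>N. ln (q a) - ln A) \<le> 2 * (g / A - 1) + (\<Sum>a\<in>N. q a / A - 1)"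
    using l1[OF g0] l1 q0 by (intro add_mono sum_mono) auto
  also have "\<dots> = (2 * g + sum q N) / A - (real (card N) + 2)"
    by (simp add: sum_subtractf sum_divide_distrib[symmetric] add_divide_distrib algebra_simps)
  also have "\<dots> = 0" using hA Anz by simp
  finally show ?thesis by (simp add: sum_subtractf algebra_simps)
qed


lemma round_props:
  fixes F :: "nat \<Rightarrow> nat \<Rightarrow> real" and r c :: "nat \<Rightarrow> real"
  assumes fin: "finite X" and F0: "\<And>x y. x \<in> X \<Longrightarrow> y \<in> X \<Longrightarrow> F x y \<ge> 0"
    and r0: "\<And>x. x \<in> X \<Longrightarrow> r x \<ge> 0" and c0: "\<And>x. x \<in> X \<Longrightarrow> c x \<ge> 0"
    and rc: "sum r X = sum c X"
  defines "R \<equiv> round_map X F r c"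
  shows "(\<forall>x\<in>X. \<forall>y\<in>X. R x y \<ge> 0) \<and> (\<forall>x\<in>X. (\<Sum>y\<in>X. R x y) = r x)
       \<and> (\<forall>y\<in>X. (\<Sum>x\<in>X. R x y) = c y)
       \<and> (\<Sum>x\<in>X. \<Sum>y\<in>X. \<bar>R x y - F x y\<bar>)
           \<le> 3 * ((\<Sum>x\<in>X. \<bar>(\<Sum>y\<in>X. F x y) - r x\<bar>) + (\<Sum>y\<in>X. \<bar>(\<Sum>x\<in>X. F x y) - c y\<bar>))"
proof -
  define rowF where "rowF = (\<lambda>x. \<Sum>y\<in>X. F x y)"
  define colF where "colF = (\<lambda>y. \<Sum>x\<in>X. F x y)"
  define a where "a = (\<lambda>x. min (r x / rowF x) 1)"
  define F1 where "F1 = (\<lambda>x y. a x * F x y)"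
  define col1 where "col1 = (\<lambda>y. \<Sum>x\<in>X. F1 x y)"
  define b where "b = (\<lambda>y. min (c y / col1 y) 1)"
  define F2 where "F2 = (\<lambda>x y. F1 x y * b y)"
  define er where "er = (\<lambda>x. r x - (\<Sum>y\<in>X. F2 x y))"
  define ec where "ec = (\<lambda>y. c y - (\<Sum>x\<in>X. F2 x y))"
  have Rdef: "R = (if (\<forall>y\<in>X. ec y = 0) then F2
        else (\<lambda>x y. F2 x y + er x * ec y / (\<Sum>z\<in>X. \<bar>ec z\<bar>)))"
    unfolding R_def round_map_def Let_def a_def F1_def b_def F2_def er_def ec_def rowF_def col1_def by simp
  define Dr where "Dr = (\<Sum>x\<in>X. \<bar>rowF x - r x\<bar>)"
  define Dc where "Dc = (\<Sum>y\<in>X. \<bar>colF y - c y\<bar>)"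
  have rowF0: "x \<in> X \<Longrightarrow> rowF x \<ge> 0" for x unfolding rowF_def using F0 by (simp add: sum_nonneg)
  have a0: "x \<in> X \<Longrightarrow> 0 \<le> a x \<and> a x \<le> 1" for x
    unfolding a_def using r0 rowF0 by simp
  have F10: "x \<in> X \<Longrightarrow> y \<in> X \<Longrightarrow> F1 x y \<ge> 0" for x y unfolding F1_def using a0 F0 by simp
  have col10: "y \<in> X \<Longrightarrow> col1 y \<ge> 0" for y unfolding col1_def using F10 by (simp add: sum_nonneg)
  have b0: "y \<in> X \<Longrightarrow> 0 \<le> b y \<and> b y \<le> 1" for y
    unfolding b_def using c0 col10 by simp
  have F20: "x \<in> X \<Longrightarrow> y \<in> X \<Longrightarrow> F2 x y \<ge> 0" for x y unfolding F2_def using F10 b0 by simp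
  have row1: "(\<Sum>y\<in>X. F1 x y) = a x * rowF x" for x
    unfolding F1_def rowF_def by (simp add: sum_distrib_left)
  have row1_le: "a x * rowF x \<le> r x" and row1_d: "rowF x - a x * rowF x \<le> \<bar>rowF x - r x\<bar>"
    if "x \<in> X" for x
  proof -
    have "a x * rowF x = (if rowF x = 0 then 0 else min (r x) (rowF x))"
      using rowF0[OF that] r0[OF that] unfolding a_def
      by (auto simp: min_def field_simps)
    thus "a x * rowF x \<le> r x" "rowF x - a x * rowF x \<le> \<bar>rowF x - r x\<bar>"
      using r0[OF that] rowF0[OF that] by auto
  qed
  have col2: "(\<Sum>x\<in>X. F2 x y) = b y * col1 y" for y
    unfolding F2_def col1_def by (simp add: sum_distrib_left mult.commute)
  have col2_le: "b y * col1 y \<le> c y" and col2_d: "c y - b y * col1 y \<le> \<bar>col1 y - c y\<bar>"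
    and col2_d2: "col1 y - b y * col1 y \<le> \<bar>col1 y - c y\<bar>"
    if "y \<in> X" for y
  proof -
    have "b y * col1 y = (if col1 y = 0 then 0 else min (c y) (col1 y))"
      using col10[OF that] c0[OF that] unfolding b_def
      by (auto simp: min_def field_simps)
    thus "b y * col1 y \<le> c y" "c y - b y * col1 y \<le> \<bar>col1 y - c y\<bar>"
       "col1 y - b y * col1 y \<le> \<bar>col1 y - c y\<bar>"
      using c0[OF that] col10[OF that] by auto
  qed
  have row2_le: "(\<Sum>y\<in>X. F2 x y) \<le> r x" if "x \<in> X" for x
  proof -
    have "(\<Sum>y\<in>X. F2 x y) \<le> (\<Sum>y\<in>X. F1 x y)"
      unfolding F2_def using F10[OF that] b0 by (intro sum_mono) (simp add: mult_left_le)
    thus ?thesis using row1 row1_le[OF that] by simp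
  qed
  have er0: "x \<in> X \<Longrightarrow> er x \<ge> 0" for x unfolding er_def using row2_le by simp
  have ec0: "y \<in> X \<Longrightarrow> ec y \<ge> 0" for y unfolding ec_def using col2 col2_le by simp
  have sumeq: "sum er X = sum ec X"
  proof -
    have "sum er X = sum r X - (\<Sum>x\<in>X. \<Sum>y\<in>X. F2 x y)" unfolding er_def by (simp add: sum_subtractf)
    moreover have "sum ec X = sum c X - (\<Sum>y\<in>X. \<Sum>x\<in>X. F2 x y)" unfolding ec_def by (simp add: sum_subtractf)
    ultimately show ?thesis using rc sum.swap[of "\<lambda>x y. F2 x y" X X] by simp
  qed
  have dF1: "(\<Sum>x\<in>X. \<Sum>y\<in>X. \<bar>F1 x y - F x y\<bar>) \<le> Dr"
  proof -
    have "(\<Sum>x\<in>X. \<Sum>y\<in>X. \<bar>F1 x y - F x y\<bar>) = (\<Sum>x\<in>X. rowF x - a x * rowF x)"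
    proof (rule sum.cong[OF refl])
      fix x assume x: "x \<in> X"
      have "(\<Sum>y\<in>X. \<bar>F1 x y - F x y\<bar>) = (\<Sum>y\<in>X. (1 - a x) * F x y)"
      proof (intro sum.cong refl)
        fix y assume y: "y \<in> X"
        have "(1 - a x) * F x y \<ge> 0" using a0[OF x] F0[OF x y] by simp
        moreover have "F1 x y - F x y = - ((1 - a x) * F x y)" unfolding F1_def by (simp add: algebra_simps)
        ultimately show "\<bar>F1 x y - F x y\<bar> = (1 - a x) * F x y" by simp
      qed
      also have "\<dots> = rowF x - a x * rowF x" unfolding rowF_def by (simp add: left_diff_distrib sum_subtractf sum_distrib_left)
      finally show "(\<Sum>y\<in>X. \<bar>F1 x y - F x y\<bar>) = rowF x - a x * rowF x" .
    qed
    also have "\<dots> \<le> Dr" unfolding Dr_def using row1_d by (intro sum_mono) auto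
    finally show ?thesis .
  qed
  have dcol1: "(\<Sum>y\<in>X. \<bar>col1 y - c y\<bar>) \<le> Dr + Dc"
  proof -
    have "(\<Sum>y\<in>X. \<bar>col1 y - c y\<bar>) \<le> (\<Sum>y\<in>X. \<bar>col1 y - colF y\<bar> + \<bar>colF y - c y\<bar>)"
      by (intro sum_mono) linarith
    also have "\<dots> = (\<Sum>y\<in>X. \<bar>col1 y - colF y\<bar>) + Dc" unfolding Dc_def by (simp add: sum.distrib)
    also have "(\<Sum>y\<in>X. \<bar>col1 y - colF y\<bar>) \<le> (\<Sum>y\<in>X. \<Sum>x\<in>X. \<bar>F1 x y - F x y\<bar>)"
      unfolding col1_def colF_def by (intro sum_mono) (simp add: sum_subtractf[symmetric] sum_abs)
    also have "\<dots> = (\<Sum>x\<in>X. \<Sum>y\<in>X. \<bar>F1 x y - F x y\<bar>)" by (rule sum.swap)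
    finally show ?thesis using dF1 by simp
  qed
  have dF2: "(\<Sum>x\<in>X. \<Sum>y\<in>X. \<bar>F2 x y - F1 x y\<bar>) \<le> Dr + Dc"
  proof -
    have "(\<Sum>x\<in>X. \<Sum>y\<in>X. \<bar>F2 x y - F1 x y\<bar>) = (\<Sum>y\<in>X. \<Sum>x\<in>X. \<bar>F2 x y - F1 x y\<bar>)" by (rule sum.swap)
    also have "\<dots> = (\<Sum>y\<in>X. col1 y - b y * col1 y)"
    proof (rule sum.cong[OF refl])
      fix y assume y: "y \<in> X"
      have "(\<Sum>x\<in>X. \<bar>F2 x y - F1 x y\<bar>) = (\<Sum>x\<in>X. (1 - b y) * F1 x y)"
      proof (intro sum.cong refl)
        fix x assume x: "x \<in> X"
        have "(1 - b y) * F1 x y \<ge> 0" using b0[OF y] F10[OF x y] by simp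
        moreover have "F2 x y - F1 x y = - ((1 - b y) * F1 x y)" unfolding F2_def by (simp add: algebra_simps)
        ultimately show "\<bar>F2 x y - F1 x y\<bar> = (1 - b y) * F1 x y" by simp
      qed
      also have "\<dots> = col1 y - b y * col1 y" unfolding col1_def by (simp add: left_diff_distrib sum_subtractf sum_distrib_left)
      finally show "(\<Sum>x\<in>X. \<bar>F2 x y - F1 x y\<bar>) = col1 y - b y * col1 y" .
    qed
    also have "\<dots> \<le> (\<Sum>y\<in>X. \<bar>col1 y - c y\<bar>)" using col2_d2 by (intro sum_mono) auto
    finally show ?thesis using dcol1 by simp
  qed
  have sec: "sum ec X \<le> Dr + Dc"
  proof -
    have "sum ec X \<le> (\<Sum>y\<in>X. \<bar>col1 y - c y\<bar>)" unfolding ec_def using col2 col2_d by (intro sum_mono) auto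
    thus ?thesis using dcol1 by simp
  qed
  have tri: "\<bar>R x y - F x y\<bar> \<le> \<bar>R x y - F2 x y\<bar> + \<bar>F2 x y - F1 x y\<bar> + \<bar>F1 x y - F x y\<bar>" for x y
    by linarith
  have tot: "(\<Sum>x\<in>X. \<Sum>y\<in>X. \<bar>R x y - F x y\<bar>) \<le> (\<Sum>x\<in>X. \<Sum>y\<in>X. \<bar>R x y - F2 x y\<bar>)
      + (\<Sum>x\<in>X. \<Sum>y\<in>X. \<bar>F2 x y - F1 x y\<bar>) + (\<Sum>x\<in>X. \<Sum>y\<in>X. \<bar>F1 x y - F x y\<bar>)"
  proof -
    have "(\<Sum>x\<in>X. \<Sum>y\<in>X. \<bar>R x y - F x y\<bar>) \<le> (\<Sum>x\<in>X. \<Sum>y\<in>X. \<bar>R x y - F2 x y\<bar> + \<bar>F2 x y - F1 x y\<bar> + \<bar>F1 x y - F x y\<bar>)"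
      using tri by (intro sum_mono) auto
    thus ?thesis by (simp add: sum.distrib)
  qed
  show ?thesis
  proof (cases "\<forall>y\<in>X. ec y = 0")
    case True
    hence R2: "R = F2" using Rdef by simp
    have "sum er X = 0" using sumeq True by simp
    hence er00: "\<forall>x\<in>X. er x = 0" using sum_nonneg_eq_0_iff[OF fin] er0 by blast
    have "(\<Sum>x\<in>X. \<Sum>y\<in>X. \<bar>R x y - F x y\<bar>) \<le> 0 + (Dr + Dc) + Dr"
      using tot dF1 dF2 by (simp add: R2)
    moreover have "0 + (Dr + Dc) + Dr \<le> 3 * (Dr + Dc)"
      using sum_nonneg[of X "\<lambda>x. \<bar>rowF x - r x\<bar>"] sum_nonneg[of X "\<lambda>y. \<bar>colF y - c y\<bar>"]
      unfolding Dr_def Dc_def by simp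
    ultimately have "(\<Sum>x\<in>X. \<Sum>y\<in>X. \<bar>R x y - F x y\<bar>) \<le> 3 * (Dr + Dc)" by linarith
    moreover have "\<forall>x\<in>X. (\<Sum>y\<in>X. R x y) = r x" using er00 unfolding R2 er_def by auto
    moreover have "\<forall>y\<in>X. (\<Sum>x\<in>X. R x y) = c y" using True unfolding R2 ec_def by auto
    ultimately show ?thesis using F20 unfolding R2 Dr_def Dc_def rowF_def colF_def by auto
  next
    case False
    define T where "T = (\<Sum>z\<in>X. \<bar>ec z\<bar>)"
    have TT: "T = sum ec X" unfolding T_def using ec0 by simp
    have Tp: "T > 0"
    proof -
      obtain y where y: "y \<in> X" "ec y \<noteq> 0" using False by auto
      have "ec y \<le> sum ec X" using ec0 y fin by (intro member_le_sum) auto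
      thus ?thesis using TT y ec0[OF y(1)] by simp
    qed
    have RR: "R = (\<lambda>x y. F2 x y + er x * ec y / T)" using Rdef False T_def by simp
    have nn: "\<forall>x\<in>X. \<forall>y\<in>X. R x y \<ge> 0" unfolding RR using F20 er0 ec0 Tp by (simp add: add_nonneg_nonneg)
    have rr: "\<forall>x\<in>X. (\<Sum>y\<in>X. R x y) = r x"
    proof
      fix x assume "x \<in> X"
      have "(\<Sum>y\<in>X. R x y) = (\<Sum>y\<in>X. F2 x y) + er x * sum ec X / T"
        unfolding RR by (simp add: sum.distrib sum_divide_distrib[symmetric] sum_distrib_left)
      thus "(\<Sum>y\<in>X. R x y) = r x" using TT Tp by (simp add: er_def)
    qed
    have cc: "\<forall>y\<in>X. (\<Sum>x\<in>X. R x y) = c y"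
    proof
      fix y assume "y \<in> X"
      have "(\<Sum>x\<in>X. R x y) = (\<Sum>x\<in>X. F2 x y) + sum er X * ec y / T"
        unfolding RR by (simp add: sum.distrib sum_divide_distrib[symmetric] sum_distrib_right)
      thus "(\<Sum>x\<in>X. R x y) = c y" using TT Tp sumeq by (simp add: ec_def)
    qed
    have dR: "(\<Sum>x\<in>X. \<Sum>y\<in>X. \<bar>R x y - F2 x y\<bar>) = sum ec X"
    proof -
      have "(\<Sum>x\<in>X. \<Sum>y\<in>X. \<bar>R x y - F2 x y\<bar>) = (\<Sum>x\<in>X. \<Sum>y\<in>X. er x * ec y / T)"
        unfolding RR using er0 ec0 Tp by (intro sum.cong refl) simp
      also have "\<dots> = (\<Sum>x\<in>X. er x * sum ec X) / T"
        by (simp add: sum_divide_distrib[symmetric] sum_distrib_left)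
      also have "\<dots> = sum er X * sum ec X / T"
        by (simp add: sum_distrib_right)
      finally show ?thesis using sumeq TT Tp by simp
    qed
    have "(\<Sum>x\<in>X. \<Sum>y\<in>X. \<bar>R x y - F x y\<bar>) \<le> (Dr + Dc) + (Dr + Dc) + Dr"
      using tot dF1 dF2 dR sec by linarith
    moreover have "(Dr + Dc) + (Dr + Dc) + Dr \<le> 3 * (Dr + Dc)"
      using sum_nonneg[of X "\<lambda>y. \<bar>colF y - c y\<bar>"] unfolding Dc_def by simp
    ultimately show ?thesis using nn rr cc unfolding Dr_def Dc_def rowF_def colF_def by linarith
  qed
qed


lemma sum_pair: "(\<Sum>p\<in>A\<times>B. h (fst p) (snd p)) = (\<Sum>x\<in>A. \<Sum>y\<in>B. (h x y :: real))"
  by (simp add: sum.cartesian_product split_beta)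

definition marg :: "(edge \<Rightarrow> nat \<Rightarrow> nat \<Rightarrow> real) \<Rightarrow> nat set \<Rightarrow> edge \<Rightarrow> nat \<Rightarrow> nat \<Rightarrow> real" where
  "marg me X e i x = (if i = fst e then (\<Sum>y\<in>X. me e x y) else (\<Sum>y\<in>X. me e y x))"

locale mrf =
  fixes V :: "nat set" and E :: "edge set" and X :: "nat set"
    and Cv :: "nat \<Rightarrow> nat \<Rightarrow> real" and Ce :: "edge \<Rightarrow> nat \<Rightarrow> nat \<Rightarrow> real" and \<eta> :: real
  assumes graph: "graph V E" and finX: "finite X" and cardX: "2 \<le> card X" and eta: "\<eta> > 0"
begin

lemma finV: "finite V" and finE: "finite E" and Vne: "V \<noteq> {}"
  and EV: "e \<in> E \<Longrightarrow> fst e \<in> V \<and> snd e \<in> V" and fs: "e \<in> E \<Longrightarrow> fst e \<noteq> snd e"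
  and nbrne: "i \<in> V \<Longrightarrow> nbr E i \<noteq> {}"
  using graph unfolding graph_def by auto

lemma Xne: "X \<noteq> {}" using cardX by auto

lemma ends_V: "e \<in> E \<Longrightarrow> ends e \<subseteq> V" using EV by (auto simp: ends_def)

lemma sum_ends: "e \<in> E \<Longrightarrow> (\<Sum>i\<in>ends e. f i) = f (fst e) + (f (snd e) :: real)"
  using fs by (simp add: ends_def)

lemma card_ends: "e \<in> E \<Longrightarrow> card (ends e) = 2"
  using fs by (simp add: ends_def)

lemma nbr_sub: "nbr E i \<subseteq> E" by (auto simp: nbr_def)
lemma fin_nbr: "finite (nbr E i)" using finE nbr_sub by (rule rev_finite_subset)
lemma in_nbr: "e \<in> nbr E i \<longleftrightarrow> e \<in> E \<and> i \<in> ends e" by (simp add: nbr_def)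

lemma Ene: "E \<noteq> {}"
  using Vne nbrne nbr_sub by blast

lemma double_count:
  "(\<Sum>i\<in>V. \<Sum>e\<in>nbr E i. f e i) = (\<Sum>e\<in>E. \<Sum>i\<in>ends e. (f e i :: real))"
proof -
  have "(\<Sum>i\<in>V. \<Sum>e\<in>nbr E i. f e i) = (\<Sum>i\<in>V. \<Sum>e\<in>{e\<in>E. i \<in> ends e}. f e i)"
    by (simp add: nbr_def)
  also have "\<dots> = (\<Sum>e\<in>E. \<Sum>i\<in>{i\<in>V. i \<in> ends e}. f e i)"
    by (rule sum.swap_restrict[OF finV finE])
  also have "\<dots> = (\<Sum>e\<in>E. \<Sum>i\<in>ends e. f e i)"
    by (intro sum.cong refl) (use ends_V in auto)
  finally show ?thesis .
qed

lemma sum_nbr_card: "(\<Sum>i\<in>V. real (card (nbr E i))) = 2 * real (card E)"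
proof -
  have "(\<Sum>i\<in>V. real (card (nbr E i))) = (\<Sum>i\<in>V. \<Sum>e\<in>nbr E i. 1)" by simp
  also have "\<dots> = (\<Sum>e\<in>E. \<Sum>i\<in>ends e. (1::real))" by (rule double_count)
  also have "\<dots> = (\<Sum>e\<in>E. 2)" by (intro sum.cong refl) (simp add: card_ends)
  finally show ?thesis by simp
qed

abbreviation "ZV lam i \<equiv> (\<Sum>y\<in>X. wV E Cv \<eta> lam i y)"
abbreviation "ZE lam e \<equiv> (\<Sum>p\<in>X \<times> X. wE Ce \<eta> lam e (fst p) (snd p))"

lemma wV_pos: "wV E Cv \<eta> lam i x > 0" by (simp add: wV_def)
lemma wE_pos: "wE Ce \<eta> lam e x y > 0" by (simp add: wE_def)
lemma ZV_pos: "ZV lam i > 0" using finX Xne wV_pos by (simp add: sum_pos)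
lemma ZE_pos: "ZE lam e > 0" using finX Xne wE_pos by (simp add: sum_pos)

lemma muV_pos: "muV E X Cv \<eta> lam i x > 0" using wV_pos ZV_pos by (simp add: muV_def)
lemma muV_sum: "(\<Sum>x\<in>X. muV E X Cv \<eta> lam i x) = 1"
  using ZV_pos[of lam i] by (simp add: muV_def sum_divide_distrib[symmetric])
lemma muE_pos: "muE X Ce \<eta> lam e x y > 0" using wE_pos ZE_pos by (simp add: muE_def)
lemma muE_sum_pair: "(\<Sum>p\<in>X\<times>X. muE X Ce \<eta> lam e (fst p) (snd p)) = 1"
  using ZE_pos[of lam e] by (simp add: muE_def sum_divide_distrib[symmetric])
lemma muE_sum: "(\<Sum>x\<in>X. \<Sum>y\<in>X. muE X Ce \<eta> lam e x y) = 1"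
  using muE_sum_pair sum_pair by metis

lemma Smarg_pos: "x \<in> X \<Longrightarrow> Smarg X Ce \<eta> lam e i x > 0"
  using finX Xne muE_pos by (simp add: Smarg_def sum_pos)
lemma Smarg_sum: "(\<Sum>x\<in>X. Smarg X Ce \<eta> lam e i x) = 1"
  using muE_sum[of lam e] sum.swap[of "\<lambda>x y. muE X Ce \<eta> lam e x y" X X]
  by (cases "i = fst e") (simp_all add: Smarg_def)

lemma Smarg_marg: "Smarg X Ce \<eta> lam e i x = marg (muE X Ce \<eta> lam) X e i x"
  by (simp add: Smarg_def marg_def)

lemma slack_sum: "(\<Sum>x\<in>X. slack E X Cv Ce \<eta> lam e i x) = 0"
  by (simp add: slack_def sum_subtractf Smarg_sum muV_sum)

definition gd :: "dual \<Rightarrow> real" where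
  "gd lam = - (1/\<eta>) * ((\<Sum>i\<in>V. ln (ZV lam i)) + (\<Sum>e\<in>E. ln (ZE lam e)))"

definition pdist :: "pseudo \<Rightarrow> bool" where
  "pdist mu \<longleftrightarrow> (\<forall>i\<in>V. \<forall>x\<in>X. fst mu i x \<ge> 0) \<and> (\<forall>i\<in>V. (\<Sum>x\<in>X. fst mu i x) = 1)
     \<and> (\<forall>e\<in>E. \<forall>x\<in>X. \<forall>y\<in>X. snd mu e x y \<ge> 0) \<and> (\<forall>e\<in>E. (\<Sum>x\<in>X. \<Sum>y\<in>X. snd mu e x y) = 1)"

definition Ent :: "pseudo \<Rightarrow> real" where
  "Ent mu = (\<Sum>i\<in>V. \<Sum>x\<in>X. fst mu i x * ln (fst mu i x))
          + (\<Sum>e\<in>E. \<Sum>x\<in>X. \<Sum>y\<in>X. snd mu e x y * ln (snd mu e x y))"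

definition Lagr :: "dual \<Rightarrow> pseudo \<Rightarrow> real" where
  "Lagr lam mu = cost V E X Cv Ce mu + Ent mu / \<eta>
     + (\<Sum>e\<in>E. \<Sum>i\<in>ends e. \<Sum>x\<in>X. lam e i x * (marg (snd mu) X e i x - fst mu i x))"

definition LV :: "dual \<Rightarrow> pseudo \<Rightarrow> nat \<Rightarrow> real" where
  "LV lam mu i = (\<Sum>x\<in>X. fst mu i x * ln (wV E Cv \<eta> lam i x)) - (\<Sum>x\<in>X. fst mu i x * ln (fst mu i x))"
definition LE :: "dual \<Rightarrow> pseudo \<Rightarrow> edge \<Rightarrow> real" where
  "LE lam mu e = (\<Sum>x\<in>X. \<Sum>y\<in>X. snd mu e x y * ln (wE Ce \<eta> lam e x y))
              - (\<Sum>x\<in>X. \<Sum>y\<in>X. snd mu e x y * ln (snd mu e x y))"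

lemma lagr_identity:
  "Lagr lam mu = - (1/\<eta>) * ((\<Sum>i\<in>V. LV lam mu i) + (\<Sum>e\<in>E. LE lam mu e))"
proof -
  obtain mv me where mu: "mu = (mv, me)" by (cases mu)
  define B1 where "B1 = (\<Sum>i\<in>V. \<Sum>x\<in>X. mv i x * (\<Sum>e\<in>nbr E i. lam e i x))"
  define B2 where "B2 = (\<Sum>e\<in>E. \<Sum>x\<in>X. \<Sum>y\<in>X. me e x y * (lam e (fst e) x + lam e (snd e) y))"
  have v: "- (1/\<eta>) * LV lam mu i = (\<Sum>x\<in>X. Cv i x * mv i x) - (\<Sum>x\<in>X. mv i x * (\<Sum>e\<in>nbr E i. lam e i x))
        + (\<Sum>x\<in>X. mv i x * ln (mv i x)) / \<eta>" for i
  proof -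
    have "(\<Sum>x\<in>X. mv i x * ln (wV E Cv \<eta> lam i x))
        = (\<Sum>x\<in>X. \<eta> * (mv i x * (\<Sum>e\<in>nbr E i. lam e i x)) - \<eta> * (Cv i x * mv i x))"
      by (intro sum.cong refl) (simp add: wV_def algebra_simps)
    also have "\<dots> = \<eta> * (\<Sum>x\<in>X. mv i x * (\<Sum>e\<in>nbr E i. lam e i x)) - \<eta> * (\<Sum>x\<in>X. Cv i x * mv i x)"
      by (simp add: sum_subtractf sum_distrib_left)
    finally have h: "(\<Sum>x\<in>X. mv i x * ln (wV E Cv \<eta> lam i x)) = \<eta> * (\<Sum>x\<in>X. mv i x * (\<Sum>e\<in>nbr E i. lam e i x)) - \<eta> * (\<Sum>x\<in>X. Cv i x * mv i x)" .
    show ?thesis using eta unfolding LV_def mu fst_conv h by (simp add: field_simps)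
  qed
  have ed: "- (1/\<eta>) * LE lam mu e = (\<Sum>x\<in>X. \<Sum>y\<in>X. Ce e x y * me e x y)
        + (\<Sum>x\<in>X. \<Sum>y\<in>X. me e x y * (lam e (fst e) x + lam e (snd e) y))
        + (\<Sum>x\<in>X. \<Sum>y\<in>X. me e x y * ln (me e x y)) / \<eta>" for e
  proof -
    have "(\<Sum>x\<in>X. \<Sum>y\<in>X. me e x y * ln (wE Ce \<eta> lam e x y))
        = (\<Sum>x\<in>X. \<Sum>y\<in>X. - \<eta> * (Ce e x y * me e x y) - \<eta> * (me e x y * (lam e (fst e) x + lam e (snd e) y)))"
      by (intro sum.cong refl) (simp add: wE_def algebra_simps)
    also have "\<dots> = - \<eta> * (\<Sum>x\<in>X. \<Sum>y\<in>X. Ce e x y * me e x y) - \<eta> * (\<Sum>x\<in>X. \<Sum>y\<in>X. me e x y * (lam e (fst e) x + lam e (snd e) y))"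
      by (simp add: sum_subtractf sum_distrib_left)
    finally have h: "(\<Sum>x\<in>X. \<Sum>y\<in>X. me e x y * ln (wE Ce \<eta> lam e x y)) = - \<eta> * (\<Sum>x\<in>X. \<Sum>y\<in>X. Ce e x y * me e x y) - \<eta> * (\<Sum>x\<in>X. \<Sum>y\<in>X. me e x y * (lam e (fst e) x + lam e (snd e) y))" .
    show ?thesis using eta unfolding LE_def mu snd_conv h by (simp add: field_simps)
  qed
  have "- (1/\<eta>) * ((\<Sum>i\<in>V. LV lam mu i) + (\<Sum>e\<in>E. LE lam mu e))
      = (\<Sum>i\<in>V. - (1/\<eta>) * LV lam mu i) + (\<Sum>e\<in>E. - (1/\<eta>) * LE lam mu e)"
    by (simp add: sum_distrib_left distrib_left)
  also have "\<dots> = cost V E X Cv Ce mu + Ent mu / \<eta> + (B2 - B1)"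
    apply (simp only: v ed)
    by (simp add: cost_def Ent_def mu B1_def B2_def sum.distrib sum_subtractf sum_divide_distrib add_divide_distrib algebra_simps)
  also have "B2 - B1 = (\<Sum>e\<in>E. \<Sum>i\<in>ends e. \<Sum>x\<in>X. lam e i x * (marg me X e i x - mv i x))"
  proof -
    have b1: "B1 = (\<Sum>e\<in>E. \<Sum>i\<in>ends e. \<Sum>x\<in>X. lam e i x * mv i x)"
    proof -
      have "B1 = (\<Sum>i\<in>V. \<Sum>e\<in>nbr E i. \<Sum>x\<in>X. lam e i x * mv i x)"
        unfolding B1_def
      proof (intro sum.cong refl)
        fix i assume "i \<in> V"
        have "(\<Sum>x\<in>X. mv i x * (\<Sum>e\<in>nbr E i. lam e i x)) = (\<Sum>x\<in>X. \<Sum>e\<in>nbr E i. lam e i x * mv i x)"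
          by (simp add: sum_distrib_left mult.commute)
        also have "\<dots> = (\<Sum>e\<in>nbr E i. \<Sum>x\<in>X. lam e i x * mv i x)" by (rule sum.swap)
        finally show "(\<Sum>x\<in>X. mv i x * (\<Sum>e\<in>nbr E i. lam e i x)) = (\<Sum>e\<in>nbr E i. \<Sum>x\<in>X. lam e i x * mv i x)" .
      qed
      thus ?thesis using double_count by simp
    qed
    have b2: "B2 = (\<Sum>e\<in>E. \<Sum>i\<in>ends e. \<Sum>x\<in>X. lam e i x * marg me X e i x)"
      unfolding B2_def
    proof (rule sum.cong[OF refl])
      fix e assume e: "e \<in> E"
      have "(\<Sum>x\<in>X. \<Sum>y\<in>X. me e x y * (lam e (fst e) x + lam e (snd e) y))
          = (\<Sum>x\<in>X. \<Sum>y\<in>X. lam e (fst e) x * me e x y) + (\<Sum>y\<in>X. \<Sum>x\<in>X. lam e (snd e) y * me e x y)"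
      proof -
        have "(\<Sum>x\<in>X. \<Sum>y\<in>X. lam e (snd e) y * me e x y) = (\<Sum>y\<in>X. \<Sum>x\<in>X. lam e (snd e) y * me e x y)"
          by (rule sum.swap)
        thus ?thesis by (simp add: sum.distrib algebra_simps)
      qed
      also have "\<dots> = (\<Sum>x\<in>X. lam e (fst e) x * marg me X e (fst e) x) + (\<Sum>x\<in>X. lam e (snd e) x * marg me X e (snd e) x)"
        using fs[OF e] by (simp add: marg_def sum_distrib_left)
      also have "\<dots> = (\<Sum>i\<in>ends e. \<Sum>x\<in>X. lam e i x * marg me X e i x)"
        using sum_ends[OF e] by simp
      finally show "(\<Sum>x\<in>X. \<Sum>y\<in>X. me e x y * (lam e (fst e) x + lam e (snd e) y))
          = (\<Sum>i\<in>ends e. \<Sum>x\<in>X. lam e i x * marg me X e i x)" .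
    qed
    show ?thesis unfolding b1 b2 by (simp add: sum_subtractf[symmetric] right_diff_distrib)
  qed
  finally show ?thesis unfolding Lagr_def mu by simp
qed


lemma gibbsV: "(\<forall>x\<in>X. mv i x \<ge> 0) \<Longrightarrow> (\<Sum>x\<in>X. mv i x) = 1 \<Longrightarrow> LV lam (mv, me) i \<le> ln (ZV lam i)"
  unfolding LV_def fst_conv using gibbs[OF finX, of "mv i" "wV E Cv \<eta> lam i"] wV_pos by auto

lemma gibbsE:
  assumes "\<forall>x\<in>X. \<forall>y\<in>X. me e x y \<ge> 0" "(\<Sum>x\<in>X. \<Sum>y\<in>X. me e x y) = 1"
  shows "LE lam (mv, me) e \<le> ln (ZE lam e)"
proof -
  have f: "finite (X \<times> X)" using finX by simp
  have "(\<Sum>p\<in>X\<times>X. me e (fst p) (snd p) * ln (wE Ce \<eta> lam e (fst p) (snd p)))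
      - (\<Sum>p\<in>X\<times>X. me e (fst p) (snd p) * ln (me e (fst p) (snd p))) \<le> ln (ZE lam e)"
    using gibbs[OF f, of "\<lambda>p. me e (fst p) (snd p)" "\<lambda>p. wE Ce \<eta> lam e (fst p) (snd p)"] wE_pos assms
    by (auto simp: sum_pair)
  thus ?thesis unfolding LE_def snd_conv by (simp add: sum.cartesian_product split_beta)
qed

definition mulam :: "dual \<Rightarrow> pseudo" where
  "mulam lam = (muV E X Cv \<eta> lam, muE X Ce \<eta> lam)"

lemma pdist_mulam: "pdist (mulam lam)"
  unfolding pdist_def mulam_def using muV_pos muE_pos muV_sum muE_sum
  by (auto intro: less_imp_le)

lemma lagr_ge: "pdist mu \<Longrightarrow> gd lam \<le> Lagr lam mu"
proof -
  assume pd: "pdist mu"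
  obtain mv me where mu: "mu = (mv, me)" by (cases mu)
  have "(\<Sum>i\<in>V. LV lam mu i) + (\<Sum>e\<in>E. LE lam mu e) \<le> (\<Sum>i\<in>V. ln (ZV lam i)) + (\<Sum>e\<in>E. ln (ZE lam e))"
    using pd unfolding mu pdist_def by (intro add_mono sum_mono gibbsV gibbsE) auto
  hence "((\<Sum>i\<in>V. LV lam mu i) + (\<Sum>e\<in>E. LE lam mu e)) / \<eta> \<le> ((\<Sum>i\<in>V. ln (ZV lam i)) + (\<Sum>e\<in>E. ln (ZE lam e))) / \<eta>"
    using eta by (intro divide_right_mono) auto
  thus ?thesis unfolding lagr_identity gd_def by simp
qed

lemma lagr_eq: "Lagr lam (mulam lam) = gd lam"
proof -
  have v: "LV lam (mulam lam) i = ln (ZV lam i)" for i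
    unfolding LV_def mulam_def fst_conv muV_def
    using gibbs_eq[OF finX, of "wV E Cv \<eta> lam i"] wV_pos Xne by auto
  have ee: "LE lam (mulam lam) e = ln (ZE lam e)" for e
  proof -
    have f: "finite (X \<times> X)" using finX by simp
    have "(\<Sum>p\<in>X\<times>X. wE Ce \<eta> lam e (fst p) (snd p) / ZE lam e * ln (wE Ce \<eta> lam e (fst p) (snd p)))
      - (\<Sum>p\<in>X\<times>X. wE Ce \<eta> lam e (fst p) (snd p) / ZE lam e * ln (wE Ce \<eta> lam e (fst p) (snd p) / ZE lam e)) = ln (ZE lam e)"
      using gibbs_eq[OF f, of "\<lambda>p. wE Ce \<eta> lam e (fst p) (snd p)"] wE_pos Xne by auto
    thus ?thesis unfolding LE_def mulam_def snd_conv muE_def by (simp add: sum.cartesian_product split_beta)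
  qed
  show ?thesis unfolding lagr_identity gd_def v ee ..
qed

lemma pdist_Ent_le: "pdist mu \<Longrightarrow> Ent mu \<le> 0"
proof -
  assume pd: "pdist mu"
  obtain mv me where mu: "mu = (mv, me)" by (cases mu)
  have le1: "mv i x \<le> 1" if "i \<in> V" "x \<in> X" for i x
  proof -
    have "mv i x \<le> (\<Sum>x\<in>X. mv i x)" using pd that finX unfolding mu pdist_def by (intro member_le_sum) auto
    thus ?thesis using pd that unfolding mu pdist_def by auto
  qed
  have le2: "me e x y \<le> 1" if "e \<in> E" "x \<in> X" "y \<in> X" for e x y
  proof -
    have "me e x y \<le> (\<Sum>y\<in>X. me e x y)" using pd that finX unfolding mu pdist_def by (intro member_le_sum) auto
    also have "\<dots> \<le> (\<Sum>x\<in>X. \<Sum>y\<in>X. me e x y)" using pd that finX unfolding mu pdist_def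
      by (intro member_le_sum[of x X "\<lambda>x. \<Sum>y\<in>X. me e x y"]) (auto intro: sum_nonneg)
    finally show ?thesis using pd that unfolding mu pdist_def by auto
  qed
  show ?thesis unfolding Ent_def mu fst_conv snd_conv
    using pd le1 le2 unfolding mu pdist_def
    by (intro add_nonpos_nonpos sum_nonpos plnp_nonpos) auto
qed

lemma pdist_Ent_ge: "pdist mu \<Longrightarrow> - Ent mu \<le> (real (card V) + 2 * real (card E)) * ln (real (card X))"
proof -
  assume pd: "pdist mu"
  obtain mv me where mu: "mu = (mv, me)" by (cases mu)
  have f: "finite (X \<times> X)" using finX by simp
  have d0: "real (card X) > 0" using cardX by simp
  have v: "- (\<Sum>x\<in>X. mv i x * ln (mv i x)) \<le> ln (real (card X))" if "i \<in> V" for i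
    using entropy_le[OF finX, of "mv i"] pd that unfolding mu pdist_def by auto
  have ee: "- (\<Sum>x\<in>X. \<Sum>y\<in>X. me e x y * ln (me e x y)) \<le> 2 * ln (real (card X))" if "e \<in> E" for e
  proof -
    have "- (\<Sum>p\<in>X\<times>X. me e (fst p) (snd p) * ln (me e (fst p) (snd p))) \<le> ln (real (card (X \<times> X)))"
      using entropy_le[OF f, of "\<lambda>p. me e (fst p) (snd p)"] pd that unfolding mu pdist_def
      by (auto simp: sum_pair)
    also have "ln (real (card (X \<times> X))) = 2 * ln (real (card X))"
      using d0 by (simp add: card_cartesian_product ln_mult)
    finally show ?thesis by (simp add: sum.cartesian_product split_beta)
  qed
  have "- Ent mu = (\<Sum>i\<in>V. - (\<Sum>x\<in>X. mv i x * ln (mv i x))) + (\<Sum>e\<in>E. - (\<Sum>x\<in>X. \<Sum>y\<in>X. me e x y * ln (me e x y)))"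
    unfolding Ent_def mu by (simp add: sum_negf)
  also have "\<dots> \<le> (\<Sum>i\<in>V. ln (real (card X))) + (\<Sum>e\<in>E. 2 * ln (real (card X)))"
    using v ee by (intro add_mono sum_mono) auto
  finally show ?thesis by (simp add: algebra_simps)
qed

lemma L2_pdist: "mu \<in> L2 V E X \<Longrightarrow> pdist mu"
proof -
  assume m: "mu \<in> L2 V E X"
  obtain mv me where mu: "mu = (mv, me)" by (cases mu)
  have "(\<Sum>x\<in>X. \<Sum>y\<in>X. me e x y) = 1" if "e \<in> E" for e
    using m that EV[OF that] unfolding mu L2_def by auto
  thus ?thesis using m unfolding mu L2_def pdist_def by auto
qed

lemma L2_marg: "mu \<in> L2 V E X \<Longrightarrow> e \<in> E \<Longrightarrow> i \<in> ends e \<Longrightarrow> x \<in> X \<Longrightarrow> marg (snd mu) X e i x = fst mu i x"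
  unfolding L2_def marg_def ends_def by auto

lemma weak_dual: "mu \<in> L2 V E X \<Longrightarrow> gd lam \<le> cost V E X Cv Ce mu"
proof -
  assume m: "mu \<in> L2 V E X"
  have "gd lam \<le> Lagr lam mu" using lagr_ge L2_pdist m by blast
  also have "\<dots> = cost V E X Cv Ce mu + Ent mu / \<eta>"
    unfolding Lagr_def using L2_marg[OF m] by simp
  also have "\<dots> \<le> cost V E X Cv Ce mu" using pdist_Ent_le[OF L2_pdist[OF m]] eta
    by (simp add: divide_nonpos_pos)
  finally show ?thesis .
qed

lemma Cnorm_ge: "i \<in> V \<Longrightarrow> x \<in> X \<Longrightarrow> \<bar>Cv i x\<bar> \<le> Cnorm V E X Cv Ce"
  and Cnorm_geE: "e \<in> E \<Longrightarrow> x \<in> X \<Longrightarrow> y \<in> X \<Longrightarrow> \<bar>Ce e x y\<bar> \<le> Cnorm V E X Cv Ce"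
proof -
  have s1: "{\<bar>Cv i x\<bar> | i x. i \<in> V \<and> x \<in> X} = (\<lambda>(i,x). \<bar>Cv i x\<bar>) ` (V \<times> X)" by auto
  have s2: "{\<bar>Ce e x y\<bar> | e x y. e \<in> E \<and> x \<in> X \<and> y \<in> X} = (\<lambda>(e,x,y). \<bar>Ce e x y\<bar>) ` (E \<times> X \<times> X)" by force
  have fin: "finite ({\<bar>Cv i x\<bar> | i x. i \<in> V \<and> x \<in> X} \<union> {\<bar>Ce e x y\<bar> | e x y. e \<in> E \<and> x \<in> X \<and> y \<in> X})"
    unfolding s1 s2 using finV finE finX by simp
  show "i \<in> V \<Longrightarrow> x \<in> X \<Longrightarrow> \<bar>Cv i x\<bar> \<le> Cnorm V E X Cv Ce"
    unfolding Cnorm_def by (rule Max_ge[OF fin]) blast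
  show "e \<in> E \<Longrightarrow> x \<in> X \<Longrightarrow> y \<in> X \<Longrightarrow> \<bar>Ce e x y\<bar> \<le> Cnorm V E X Cv Ce"
    unfolding Cnorm_def by (rule Max_ge[OF fin]) blast
qed

abbreviation "Cn \<equiv> Cnorm V E X Cv Ce"

lemma Cn_nonneg: "Cn \<ge> 0"
proof -
  obtain i where "i \<in> V" using Vne by auto
  obtain x where "x \<in> X" using Xne by auto
  show ?thesis using Cnorm_ge[OF \<open>i\<in>V\<close> \<open>x\<in>X\<close>] by linarith
qed

lemma cost_bound: "pdist mu \<Longrightarrow> \<bar>cost V E X Cv Ce mu\<bar> \<le> (real (card V) + real (card E)) * Cn"
proof -
  assume pd: "pdist mu"
  obtain mv me where mu: "mu = (mv, me)" by (cases mu)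
  have v: "\<bar>\<Sum>x\<in>X. Cv i x * mv i x\<bar> \<le> Cn" if "i \<in> V" for i
  proof -
    have "\<bar>\<Sum>x\<in>X. Cv i x * mv i x\<bar> \<le> (\<Sum>x\<in>X. \<bar>Cv i x * mv i x\<bar>)" by (rule sum_abs)
    also have "\<dots> \<le> (\<Sum>x\<in>X. Cn * mv i x)"
      using pd that Cnorm_ge[OF that] unfolding mu pdist_def
      by (intro sum_mono) (simp add: abs_mult mult_right_mono)
    also have "\<dots> = Cn" using pd that unfolding mu pdist_def by (simp add: sum_distrib_left[symmetric])
    finally show ?thesis .
  qed
  have ee: "\<bar>\<Sum>x\<in>X. \<Sum>y\<in>X. Ce e x y * me e x y\<bar> \<le> Cn" if "e \<in> E" for e
  proof -
    have "\<bar>\<Sum>x\<in>X. \<Sum>y\<in>X. Ce e x y * me e x y\<bar> \<le> (\<Sum>x\<in>X. \<bar>\<Sum>y\<in>X. Ce e x y * me e x y\<bar>)" by (rule sum_abs)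
    also have "\<dots> \<le> (\<Sum>x\<in>X. \<Sum>y\<in>X. \<bar>Ce e x y * me e x y\<bar>)" by (intro sum_mono sum_abs)
    also have "\<dots> \<le> (\<Sum>x\<in>X. \<Sum>y\<in>X. Cn * me e x y)"
      using pd that Cnorm_geE[OF that] unfolding mu pdist_def
      by (intro sum_mono) (simp add: abs_mult mult_right_mono)
    also have "\<dots> = Cn" using pd that unfolding mu pdist_def by (simp add: sum_distrib_left[symmetric])
    finally show ?thesis .
  qed
  have "\<bar>cost V E X Cv Ce mu\<bar> \<le> (\<Sum>i\<in>V. \<bar>\<Sum>x\<in>X. Cv i x * mv i x\<bar>) + (\<Sum>e\<in>E. \<bar>\<Sum>x\<in>X. \<Sum>y\<in>X. Ce e x y * me e x y\<bar>)"
    unfolding cost_def mu fst_conv snd_conv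
    by (rule order_trans[OF abs_triangle_ineq add_mono[OF sum_abs sum_abs]])
  also have "\<dots> \<le> (\<Sum>i\<in>V. Cn) + (\<Sum>e\<in>E. Cn)" using v ee by (intro add_mono sum_mono) auto
  finally show ?thesis by (simp add: algebra_simps)
qed

lemma compare:
  assumes pd: "pdist mu'"
    and sl: "\<And>e i x. e \<in> E \<Longrightarrow> i \<in> ends e \<Longrightarrow> x \<in> X \<Longrightarrow>
              marg (snd mu') X e i x - fst mu' i x = slack E X Cv Ce \<eta> lam e i x"
  shows "cost V E X Cv Ce (mulam lam) \<le> cost V E X Cv Ce mu'
           + (real (card V) + 2 * real (card E)) * ln (real (card X)) / \<eta>"
proof -
  define B where "B = (\<Sum>e\<in>E. \<Sum>i\<in>ends e. \<Sum>x\<in>X. lam e i x * slack E X Cv Ce \<eta> lam e i x)"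
  have b1: "Lagr lam mu' = cost V E X Cv Ce mu' + Ent mu' / \<eta> + B"
    unfolding Lagr_def B_def using sl by simp
  have b2: "Lagr lam (mulam lam) = cost V E X Cv Ce (mulam lam) + Ent (mulam lam) / \<eta> + B"
    unfolding Lagr_def B_def
    by (simp add: mulam_def slack_def Smarg_marg)
  have "gd lam \<le> Lagr lam mu'" by (rule lagr_ge[OF pd])
  hence "cost V E X Cv Ce (mulam lam) + Ent (mulam lam) / \<eta> \<le> cost V E X Cv Ce mu' + Ent mu' / \<eta>"
    using b1 b2 lagr_eq by simp
  moreover have "Ent mu' / \<eta> \<le> 0" using pdist_Ent_le[OF pd] eta by (simp add: divide_nonpos_pos)
  moreover have "- Ent (mulam lam) / \<eta> \<le> (real (card V) + 2 * real (card E)) * ln (real (card X)) / \<eta>"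
    using divide_right_mono[OF pdist_Ent_ge[OF pdist_mulam, of lam], of \<eta>] eta by simp
  ultimately show ?thesis by (simp add: algebra_simps)
qed

end


lemma lin2: "(\<Sum>i\<in>A. \<Sum>x\<in>B. c i x * (a * f i x + b * g i x)) = a * (\<Sum>i\<in>A. \<Sum>x\<in>B. c i x * f i x) + b * (\<Sum>i\<in>A. \<Sum>x\<in>B. c i x * (g i x :: real))"
  by (simp add: sum_distrib_left distrib_left sum.distrib algebra_simps)
lemma lin3: "(\<Sum>i\<in>A. \<Sum>x\<in>B. \<Sum>y\<in>C. c i x y * (a * f i x y + b * g i x y)) = a * (\<Sum>i\<in>A. \<Sum>x\<in>B. \<Sum>y\<in>C. c i x y * f i x y) + b * (\<Sum>i\<in>A. \<Sum>x\<in>B. \<Sum>y\<in>C. c i x y * (g i x y :: real))"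
  by (simp add: sum_distrib_left distrib_left sum.distrib algebra_simps)

lemma cost_mix:
  "cost V E X Cv Ce (\<lambda>i x. (1 - t) * f i x + t * g i x, \<lambda>e x y. (1 - t) * h e x y + t * k e x y)
   = (1 - t) * cost V E X Cv Ce (f, h) + t * cost V E X Cv Ce (g, k)"
  unfolding cost_def fst_conv snd_conv lin3 unfolding lin2 by (simp add: algebra_simps)

context mrf begin

abbreviation "nu lam \<equiv> slack E X Cv Ce \<eta> lam"
abbreviation "dd \<equiv> real (card X)"

lemma dd_pos: "dd > 0" using cardX by simp

lemma mulam_cost:
  assumes m: "mu \<in> L2 V E X" and t0: "t > 0" and t1: "t \<le> 1"
    and sm: "\<And>e i x. e \<in> E \<Longrightarrow> i \<in> ends e \<Longrightarrow> x \<in> X \<Longrightarrow> dd * \<bar>nu lam e i x\<bar> \<le> t"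
  shows "cost V E X Cv Ce (mulam lam) \<le> cost V E X Cv Ce mu
     + (real (card V) + 2 * real (card E)) * ln dd / \<eta> + 2 * t * (real (card V) + real (card E)) * Cn"
proof -
  obtain mv me where mu: "mu = (mv, me)" by (cases mu)
  define a where "a = (\<lambda>e x. 1 / dd + nu lam e (fst e) x / t)"
  define b where "b = (\<lambda>e y. 1 / dd + nu lam e (snd e) y / t)"
  define U :: pseudo where "U = ((\<lambda>i x. 1 / dd), (\<lambda>e x y. a e x * b e y))"
  define mu' :: pseudo where "mu' = (\<lambda>i x. (1 - t) * mv i x + t * (1 / dd), \<lambda>e x y. (1 - t) * me e x y + t * (a e x * b e y))"
  have pmu: "pdist mu" using L2_pdist[OF m] .
  have a0: "a e x \<ge> 0" if "e \<in> E" "x \<in> X" for e x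
  proof -
    have "fst e \<in> ends e" by (simp add: ends_def)
    hence "dd * \<bar>nu lam e (fst e) x\<bar> \<le> t" using sm that by blast
    hence "\<bar>nu lam e (fst e) x\<bar> / t \<le> 1 / dd" using t0 dd_pos by (simp add: field_simps)
    moreover have "- nu lam e (fst e) x / t \<le> \<bar>nu lam e (fst e) x\<bar> / t"
      using t0 by (intro divide_right_mono) auto
    ultimately have "- (nu lam e (fst e) x / t) \<le> 1 / dd" by simp
    thus ?thesis unfolding a_def by simp
  qed
  have b0: "b e x \<ge> 0" if "e \<in> E" "x \<in> X" for e x
  proof -
    have "snd e \<in> ends e" by (simp add: ends_def)
    hence "dd * \<bar>nu lam e (snd e) x\<bar> \<le> t" using sm that by blast
    hence "\<bar>nu lam e (snd e) x\<bar> / t \<le> 1 / dd" using t0 dd_pos by (simp add: field_simps)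
    moreover have "- nu lam e (snd e) x / t \<le> \<bar>nu lam e (snd e) x\<bar> / t"
      using t0 by (intro divide_right_mono) auto
    ultimately have "- (nu lam e (snd e) x / t) \<le> 1 / dd" by simp
    thus ?thesis unfolding b_def by simp
  qed
  have sum_dd: "(\<Sum>x\<in>X. 1 / dd) = 1" using dd_pos by simp
  have asum: "(\<Sum>x\<in>X. a e x) = 1" for e
    unfolding a_def using sum_dd by (simp add: sum.distrib sum_divide_distrib[symmetric] slack_sum)
  have bsum: "(\<Sum>x\<in>X. b e x) = 1" for e
    unfolding b_def using sum_dd by (simp add: sum.distrib sum_divide_distrib[symmetric] slack_sum)
  have absum: "(\<Sum>x\<in>X. \<Sum>y\<in>X. a e x * b e y) = 1" for e
    by (simp add: sum_distrib_left[symmetric] sum_distrib_right[symmetric] asum bsum)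
  have pU: "pdist U" unfolding U_def pdist_def using dd_pos a0 b0 absum sum_dd by auto
  have pmu': "pdist mu'"
    using pmu t1 t0 dd_pos a0 b0 unfolding pdist_def mu'_def
    by (auto simp: sum.distrib sum_distrib_left[symmetric] absum sum_dd mu pdist_def asum bsum)
  have slk: "marg (snd mu') X e i x - fst mu' i x = nu lam e i x"
    if e: "e \<in> E" and i: "i \<in> ends e" and x: "x \<in> X" for e i x
  proof (cases "i = fst e")
    case True
    have "marg (snd mu') X e i x = (1 - t) * (\<Sum>y\<in>X. me e x y) + t * a e x"
      using True unfolding marg_def mu'_def
      by (simp add: sum.distrib sum_distrib_left[symmetric] bsum)
    also have "(\<Sum>y\<in>X. me e x y) = mv i x" using L2_marg[OF m e i x] True unfolding mu by (simp add: marg_def)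
    finally show ?thesis unfolding mu'_def a_def using True t0 by (simp add: algebra_simps)
  next
    case False
    hence isn: "i = snd e" using i by (auto simp: ends_def)
    have "marg (snd mu') X e i x = (1 - t) * (\<Sum>y\<in>X. me e y x) + t * b e x"
      using False unfolding marg_def mu'_def
      by (simp add: sum.distrib sum_distrib_left[symmetric] sum_distrib_right[symmetric] asum)
    also have "(\<Sum>y\<in>X. me e y x) = mv i x" using L2_marg[OF m e i x] False unfolding mu by (simp add: marg_def)
    finally show ?thesis unfolding mu'_def b_def using isn t0 by (simp add: algebra_simps)
  qed
  have c1: "cost V E X Cv Ce (mulam lam) \<le> cost V E X Cv Ce mu'
           + (real (card V) + 2 * real (card E)) * ln dd / \<eta>"
    by (rule compare[OF pmu' slk])
  have "cost V E X Cv Ce mu' = (1 - t) * cost V E X Cv Ce mu + t * cost V E X Cv Ce U"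
    unfolding mu'_def U_def mu by (rule cost_mix)
  also have "\<dots> = cost V E X Cv Ce mu + t * (cost V E X Cv Ce U - cost V E X Cv Ce mu)"
    by (simp add: algebra_simps)
  also have "\<dots> \<le> cost V E X Cv Ce mu + t * (2 * (real (card V) + real (card E)) * Cn)"
  proof -
    have "cost V E X Cv Ce U - cost V E X Cv Ce mu \<le> 2 * (real (card V) + real (card E)) * Cn"
      using cost_bound[OF pU] cost_bound[OF pmu] by (simp add: abs_le_iff algebra_simps)
    thus ?thesis using t0 by (simp add: mult_left_mono)
  qed
  finally show ?thesis using c1 by (simp add: algebra_simps)
qed


definition N1 :: "dual \<Rightarrow> edge \<Rightarrow> nat \<Rightarrow> real" where
  "N1 lam e i = (\<Sum>x\<in>X. \<bar>nu lam e i x\<bar>)"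

abbreviation "Q lam \<equiv> slack_obj E X Cv Ce \<eta> lam"

lemma Q_def': "Q lam = (\<Sum>e\<in>E. \<Sum>i\<in>ends e. (N1 lam e i)\<^sup>2)"
  by (simp add: slack_obj_def N1_def)

lemma N1_nonneg: "N1 lam e i \<ge> 0" by (simp add: N1_def sum_nonneg)

lemma Q_nonneg: "Q lam \<ge> 0" unfolding Q_def' by (intro sum_nonneg) auto

lemma N1_sq_le: "e \<in> E \<Longrightarrow> i \<in> ends e \<Longrightarrow> (N1 lam e i)\<^sup>2 \<le> Q lam"
proof -
  assume e: "e \<in> E" and i: "i \<in> ends e"
  have fe: "finite (ends e)" by (simp add: ends_def)
  have "(N1 lam e i)\<^sup>2 \<le> (\<Sum>i\<in>ends e. (N1 lam e i)\<^sup>2)"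
    using i fe by (intro member_le_sum) auto
  also have "\<dots> \<le> (\<Sum>e\<in>E. \<Sum>i\<in>ends e. (N1 lam e i)\<^sup>2)"
    using e finE by (intro member_le_sum[of e E "\<lambda>e. \<Sum>i\<in>ends e. (N1 lam e i)\<^sup>2"]) (auto intro: sum_nonneg)
  finally show ?thesis unfolding Q_def' .
qed

lemma nu_le_N1: "x \<in> X \<Longrightarrow> \<bar>nu lam e i x\<bar> \<le> N1 lam e i"
  unfolding N1_def using finX by (intro member_le_sum[of x X "\<lambda>x. \<bar>nu lam e i x\<bar>"]) auto

lemma amgm_s: "s > 0 \<Longrightarrow> (z::real) \<le> (z\<^sup>2 / s + s) / 2"
proof -
  assume s: "s > 0"
  have "0 \<le> (z - s)\<^sup>2" by simp
  hence "2 * s * z \<le> z\<^sup>2 + s\<^sup>2" by (simp add: power2_eq_square algebra_simps)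
  hence "2 * s * z / s \<le> (z\<^sup>2 + s\<^sup>2) / s" using s by (intro divide_right_mono) auto
  thus ?thesis using s by (simp add: power2_eq_square field_simps)
qed

lemma Proj_props:
  "Proj E X Cv Ce \<eta> lam \<in> L2 V E X \<and>
   cost V E X Cv Ce (Proj E X Cv Ce \<eta> lam) \<le> cost V E X Cv Ce (mulam lam)
      + 3 * Cn * (\<Sum>e\<in>E. \<Sum>i\<in>ends e. N1 lam e i)"
proof -
  define R where "R = (\<lambda>e. round_map X (muE X Ce \<eta> lam e) (muV E X Cv \<eta> lam (fst e)) (muV E X Cv \<eta> lam (snd e)))"
  have P: "Proj E X Cv Ce \<eta> lam = (muV E X Cv \<eta> lam, R)" unfolding Proj_def R_def ..
  have rp: "(\<forall>x\<in>X. \<forall>y\<in>X. R e x y \<ge> 0) \<and> (\<forall>x\<in>X. (\<Sum>y\<in>X. R e x y) = muV E X Cv \<eta> lam (fst e) x)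
       \<and> (\<forall>y\<in>X. (\<Sum>x\<in>X. R e x y) = muV E X Cv \<eta> lam (snd e) y)
       \<and> (\<Sum>x\<in>X. \<Sum>y\<in>X. \<bar>R e x y - muE X Ce \<eta> lam e x y\<bar>)
           \<le> 3 * ((\<Sum>x\<in>X. \<bar>(\<Sum>y\<in>X. muE X Ce \<eta> lam e x y) - muV E X Cv \<eta> lam (fst e) x\<bar>)
              + (\<Sum>y\<in>X. \<bar>(\<Sum>x\<in>X. muE X Ce \<eta> lam e x y) - muV E X Cv \<eta> lam (snd e) y\<bar>))" for e
    unfolding R_def
    by (rule round_props[OF finX]) (auto simp: muV_sum intro: less_imp_le muE_pos muV_pos)
  have l1: "(\<Sum>x\<in>X. \<Sum>y\<in>X. \<bar>R e x y - muE X Ce \<eta> lam e x y\<bar>) \<le> 3 * (\<Sum>i\<in>ends e. N1 lam e i)"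
    if e: "e \<in> E" for e
  proof -
    have "(\<Sum>x\<in>X. \<bar>(\<Sum>y\<in>X. muE X Ce \<eta> lam e x y) - muV E X Cv \<eta> lam (fst e) x\<bar>) = N1 lam e (fst e)"
      unfolding N1_def slack_def Smarg_def by simp
    moreover have "(\<Sum>y\<in>X. \<bar>(\<Sum>x\<in>X. muE X Ce \<eta> lam e x y) - muV E X Cv \<eta> lam (snd e) y\<bar>) = N1 lam e (snd e)"
      unfolding N1_def slack_def Smarg_def using fs[OF e] by simp
    ultimately show ?thesis using rp[of e] sum_ends[OF e] by simp
  qed
  have inL2: "Proj E X Cv Ce \<eta> lam \<in> L2 V E X"
    unfolding P L2_def using rp muV_sum muV_pos by (auto intro: less_imp_le)
  have "cost V E X Cv Ce (Proj E X Cv Ce \<eta> lam) - cost V E X Cv Ce (mulam lam)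
      = (\<Sum>e\<in>E. \<Sum>x\<in>X. \<Sum>y\<in>X. Ce e x y * (R e x y - muE X Ce \<eta> lam e x y))"
    unfolding P mulam_def cost_def by (simp add: sum_subtractf right_diff_distrib)
  also have "\<dots> \<le> (\<Sum>e\<in>E. Cn * (3 * (\<Sum>i\<in>ends e. N1 lam e i)))"
  proof (rule sum_mono)
    fix e assume e: "e \<in> E"
    have "(\<Sum>x\<in>X. \<Sum>y\<in>X. Ce e x y * (R e x y - muE X Ce \<eta> lam e x y))
        \<le> (\<Sum>x\<in>X. \<Sum>y\<in>X. Cn * \<bar>R e x y - muE X Ce \<eta> lam e x y\<bar>)"
    proof (intro sum_mono)
      fix x y assume x: "x \<in> X" and y: "y \<in> X"
      have "Ce e x y * (R e x y - muE X Ce \<eta> lam e x y) \<le> \<bar>Ce e x y\<bar> * \<bar>R e x y - muE X Ce \<eta> lam e x y\<bar>"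
        by (metis abs_ge_self abs_mult)
      also have "\<dots> \<le> Cn * \<bar>R e x y - muE X Ce \<eta> lam e x y\<bar>"
        using Cnorm_geE[OF e x y] by (intro mult_right_mono) auto
      finally show "Ce e x y * (R e x y - muE X Ce \<eta> lam e x y) \<le> Cn * \<bar>R e x y - muE X Ce \<eta> lam e x y\<bar>" .
    qed
    also have "\<dots> = Cn * (\<Sum>x\<in>X. \<Sum>y\<in>X. \<bar>R e x y - muE X Ce \<eta> lam e x y\<bar>)"
      by (simp add: sum_distrib_left)
    also have "\<dots> \<le> Cn * (3 * (\<Sum>i\<in>ends e. N1 lam e i))"
      using l1[OF e] Cn_nonneg by (intro mult_left_mono) auto
    finally show "(\<Sum>x\<in>X. \<Sum>y\<in>X. Ce e x y * (R e x y - muE X Ce \<eta> lam e x y)) \<le> Cn * (3 * (\<Sum>i\<in>ends e. N1 lam e i))" .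
  qed
  also have "\<dots> = 3 * Cn * (\<Sum>e\<in>E. \<Sum>i\<in>ends e. N1 lam e i)"
    by (simp add: sum_distrib_left algebra_simps)
  finally show ?thesis using inL2 by simp
qed

lemma pointwise:
  assumes m: "mu \<in> L2 V E X" and s: "s > 0"
  shows "cost V E X Cv Ce (Proj E X Cv Ce \<eta> lam) \<le> cost V E X Cv Ce mu
     + (real (card V) + 2 * real (card E)) * ln dd / \<eta>
     + Cn * (2 * dd * (real (card V) + real (card E)) + 6 * real (card E)) * ((Q lam / s + s) / 2)"
proof -
  define Rr where "Rr = (Q lam / s + s) / 2"
  define H where "H = (real (card V) + 2 * real (card E)) * ln dd / \<eta>"
  define nm where "nm = real (card V) + real (card E)"
  have H0: "H \<ge> 0" unfolding H_def using eta cardX by (auto intro!: divide_nonneg_pos mult_nonneg_nonneg)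
  have Rr0: "Rr > 0" unfolding Rr_def using s Q_nonneg[of lam] by (simp add: add_nonneg_pos)
  have N1R: "N1 lam e i \<le> Rr" if "e \<in> E" "i \<in> ends e" for e i
  proof -
    have "N1 lam e i \<le> ((N1 lam e i)\<^sup>2 / s + s) / 2" by (rule amgm_s[OF s])
    also have "\<dots> \<le> Rr" unfolding Rr_def using N1_sq_le[OF that] s by (simp add: divide_right_mono)
    finally show ?thesis .
  qed
  have m1: "real (card E) \<ge> 1" using Ene finE by (simp add: Suc_leI card_gt_0_iff)
  have sumN: "(\<Sum>e\<in>E. \<Sum>i\<in>ends e. N1 lam e i) \<le> 2 * real (card E) * Rr"
  proof -
    have "(\<Sum>e\<in>E. \<Sum>i\<in>ends e. N1 lam e i) \<le> (\<Sum>e\<in>E. \<Sum>i\<in>ends e. ((N1 lam e i)\<^sup>2 / s + s) / 2)"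
      using amgm_s[OF s] by (intro sum_mono) auto
    also have "\<dots> = (\<Sum>e\<in>E. \<Sum>i\<in>ends e. (N1 lam e i)\<^sup>2) / (2 * s) + (\<Sum>e\<in>E. \<Sum>i\<in>ends e. s / 2)"
      by (simp add: sum.distrib add_divide_distrib sum_divide_distrib[symmetric])
    also have "(\<Sum>e\<in>E. \<Sum>i\<in>ends e. s / 2) = real (card E) * s"
      by (simp add: card_ends)
    also have "(\<Sum>e\<in>E. \<Sum>i\<in>ends e. (N1 lam e i)\<^sup>2) / (2 * s) + real (card E) * s
        \<le> 2 * real (card E) * Rr"
    proof -
      have "1 * (Q lam / s) \<le> real (card E) * (Q lam / s)"
        using m1 s Q_nonneg[of lam] by (intro mult_right_mono) auto
      moreover have "Q lam / (2 * s) \<le> 1 * (Q lam / s)" using s Q_nonneg[of lam] by (simp add: field_simps)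
      ultimately have "Q lam / (2 * s) \<le> real (card E) * (Q lam / s)" by linarith
      moreover have "2 * real (card E) * Rr = real (card E) * (Q lam / s) + real (card E) * s"
        unfolding Rr_def by (simp add: algebra_simps)
      ultimately show ?thesis unfolding Q_def'[symmetric] by linarith
    qed
    finally show ?thesis .
  qed
  have cm: "cost V E X Cv Ce (mulam lam) \<le> cost V E X Cv Ce mu + H + 2 * (dd * Rr) * nm * Cn"
  proof (cases "dd * Rr \<le> 1")
    case True
    show ?thesis unfolding H_def nm_def
    proof (rule mulam_cost[OF m])
      show "0 < dd * Rr" using Rr0 dd_pos by simp
      show "dd * Rr \<le> 1" by fact
      fix e i x assume "e \<in> E" "i \<in> ends e" "x \<in> X"
      thus "dd * \<bar>nu lam e i x\<bar> \<le> dd * Rr"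
        using nu_le_N1 N1R dd_pos by (meson mult_left_mono order_trans less_imp_le)
    qed
  next
    case False
    have "cost V E X Cv Ce (mulam lam) \<le> nm * Cn" using cost_bound[OF pdist_mulam] unfolding nm_def by (simp add: abs_le_iff)
    moreover have "- nm * Cn \<le> cost V E X Cv Ce mu" using cost_bound[OF L2_pdist[OF m]] unfolding nm_def by (simp add: abs_le_iff algebra_simps)
    moreover have "2 * nm * Cn \<le> 2 * (dd * Rr) * nm * Cn"
    proof -
      have "1 * (2 * nm * Cn) \<le> (dd * Rr) * (2 * nm * Cn)"
        using False Cn_nonneg unfolding nm_def by (intro mult_right_mono) auto
      thus ?thesis by (simp add: algebra_simps)
    qed
    ultimately show ?thesis using H0 by linarith
  qed
  have pr: "cost V E X Cv Ce (Proj E X Cv Ce \<eta> lam) \<le> cost V E X Cv Ce (mulam lam) + 3 * Cn * (2 * real (card E) * Rr)"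
    using Proj_props[of lam] sumN Cn_nonneg by (smt (verit) mult_left_mono)
  show ?thesis using cm pr unfolding H_def[symmetric] Rr_def[symmetric] nm_def
    by (simp add: algebra_simps)
qed

end


lemma exp_half_ln: "r > 0 \<Longrightarrow> exp (ln r / 2) = sqrt r"
proof -
  assume r: "r > 0"
  have "exp (ln (sqrt r)) = sqrt r" using r by simp
  moreover have "ln (sqrt r) = ln r / 2" using r by (simp add: ln_sqrt)
  ultimately show ?thesis by simp
qed

context mrf begin

lemma ZV_change:
  assumes h: "\<And>x. x \<in> X \<Longrightarrow> (\<Sum>e\<in>nbr E i. lam' e i x) = (\<Sum>e\<in>nbr E i. lam e i x) + D x"
  shows "ZV lam' i = ZV lam i * (\<Sum>x\<in>X. muV E X Cv \<eta> lam i x * exp (\<eta> * D x))"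
proof -
  have "ZV lam' i = (\<Sum>x\<in>X. wV E Cv \<eta> lam i x * exp (\<eta> * D x))"
    by (intro sum.cong refl) (simp add: wV_def h distrib_left exp_add[symmetric] algebra_simps)
  also have "\<dots> = (\<Sum>x\<in>X. ZV lam i * (muV E X Cv \<eta> lam i x * exp (\<eta> * D x)))"
    using ZV_pos[of lam i] by (intro sum.cong refl) (simp add: muV_def)
  finally show ?thesis by (simp add: sum_distrib_left)
qed

lemma ZV_same:
  assumes h: "\<And>x. x \<in> X \<Longrightarrow> (\<Sum>e\<in>nbr E i. lam' e i x) = (\<Sum>e\<in>nbr E i. lam e i x)"
  shows "ZV lam' i = ZV lam i"
  by (intro sum.cong refl) (simp add: wV_def h)

lemma ZE_pair: "ZE lam e = (\<Sum>x\<in>X. \<Sum>y\<in>X. wE Ce \<eta> lam e x y)"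
  by (rule sum_pair)

lemma ZE_change:
  assumes e: "e \<in> E" and i: "i \<in> ends e" and j: "j \<in> ends e" "j \<noteq> i"
    and hi: "\<And>x. x \<in> X \<Longrightarrow> lam' e i x = lam e i x + \<delta> x"
    and hj: "\<And>x. x \<in> X \<Longrightarrow> lam' e j x = lam e j x"
  shows "ZE lam' e = ZE lam e * (\<Sum>x\<in>X. Smarg X Ce \<eta> lam e i x * exp (- \<eta> * \<delta> x))"
proof (cases "i = fst e")
  case True
  hence jj: "j = snd e" using j by (auto simp: ends_def)
  have "ZE lam' e = (\<Sum>x\<in>X. \<Sum>y\<in>X. wE Ce \<eta> lam e x y * exp (- \<eta> * \<delta> x))"
    unfolding ZE_pair using True jj hi hj
    by (intro sum.cong refl) (simp add: wE_def exp_add[symmetric] algebra_simps)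
  also have "\<dots> = (\<Sum>x\<in>X. \<Sum>y\<in>X. ZE lam e * (muE X Ce \<eta> lam e x y * exp (- \<eta> * \<delta> x)))"
    using ZE_pos[of lam e] by (intro sum.cong refl) (simp add: muE_def)
  also have "\<dots> = ZE lam e * (\<Sum>x\<in>X. (\<Sum>y\<in>X. muE X Ce \<eta> lam e x y) * exp (- \<eta> * \<delta> x))"
    by (simp add: sum_distrib_left sum_distrib_right mult.assoc)
  finally show ?thesis using True by (simp add: Smarg_def)
next
  case False
  hence ii: "i = snd e" and jj: "j = fst e" using i j by (auto simp: ends_def)
  have "ZE lam' e = (\<Sum>x\<in>X. \<Sum>y\<in>X. wE Ce \<eta> lam e x y * exp (- \<eta> * \<delta> y))"
    unfolding ZE_pair using ii jj hi hj
    by (intro sum.cong refl) (simp add: wE_def exp_add[symmetric] algebra_simps)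
  also have "\<dots> = (\<Sum>y\<in>X. \<Sum>x\<in>X. wE Ce \<eta> lam e x y * exp (- \<eta> * \<delta> y))" by (rule sum.swap)
  also have "\<dots> = (\<Sum>y\<in>X. \<Sum>x\<in>X. ZE lam e * (muE X Ce \<eta> lam e x y * exp (- \<eta> * \<delta> y)))"
    using ZE_pos[of lam e] by (intro sum.cong refl) (simp add: muE_def)
  also have "\<dots> = ZE lam e * (\<Sum>y\<in>X. (\<Sum>x\<in>X. muE X Ce \<eta> lam e x y) * exp (- \<eta> * \<delta> y))"
    by (simp add: sum_distrib_left sum_distrib_right mult.assoc)
  finally show ?thesis using False ii by (simp add: Smarg_def)
qed

lemma ZE_same:
  assumes "\<And>x. x \<in> X \<Longrightarrow> lam' e (fst e) x = lam e (fst e) x"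
    "\<And>x. x \<in> X \<Longrightarrow> lam' e (snd e) x = lam e (snd e) x"
  shows "ZE lam' e = ZE lam e"
  unfolding ZE_pair using assms by (intro sum.cong refl) (simp add: wE_def)

lemma gd_diff: "gd lam' - gd lam = - (1/\<eta>) * ((\<Sum>j\<in>V. ln (ZV lam' j) - ln (ZV lam j)) + (\<Sum>e\<in>E. ln (ZE lam' e) - ln (ZE lam e)))"
  unfolding gd_def by (simp add: sum_subtractf algebra_simps)


lemma mul_sqrt_div: "(x::real) > 0 \<Longrightarrow> y > 0 \<Longrightarrow> x * sqrt (y / x) = sqrt (y * x)"
proof -
  assume x: "x > 0" and y: "y > 0"
  have "sqrt (y * x) = sqrt (x * x * (y / x))" using x by (simp add: field_simps)
  also have "\<dots> = sqrt (x * x) * sqrt (y / x)" by (rule real_sqrt_mult)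
  also have "sqrt (x * x) = x" using x by simp
  finally show ?thesis by simp
qed

lemma bc_bound:
  assumes BC: "BC = (\<Sum>x\<in>X. sqrt (Smarg X Ce \<eta> lam e i x * muV E X Cv \<eta> lam i x))"
  shows "BC > 0" and "(N1 lam e i)\<^sup>2 / (4 * \<eta>) \<le> - (2 / \<eta>) * ln BC"
proof -
  show bp: "BC > 0" unfolding BC using finX Xne Smarg_pos muV_pos by (intro sum_pos) auto
  have h: "(N1 lam e i)\<^sup>2 \<le> 8 * (1 - BC)"
    unfolding BC N1_def slack_def
    by (rule hellinger[OF finX]) (auto intro: less_imp_le Smarg_pos muV_pos simp: Smarg_sum muV_sum)
  have "ln BC \<le> BC - 1" using bp by (rule ln_le_minus_one)
  moreover have "(N1 lam e i)\<^sup>2 \<le> 8 - 8 * BC" using h by (simp add: algebra_simps)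
  ultimately have "(N1 lam e i)\<^sup>2 \<le> - 8 * ln BC" by linarith
  hence "(N1 lam e i)\<^sup>2 / (4 * \<eta>) \<le> (- 8 * ln BC) / (4 * \<eta>)" using eta by (intro divide_right_mono) auto
  thus "(N1 lam e i)\<^sup>2 / (4 * \<eta>) \<le> - (2 / \<eta>) * ln BC" by simp
qed


end


context mrf begin
lemma emp_progress:
  assumes e: "e \<in> E" and i: "i \<in> ends e"
  shows "gd lam + (N1 lam e i)\<^sup>2 / (4 * \<eta>) \<le> gd (emp_update E X Cv Ce \<eta> (e, i) lam)"
proof -
  define lam' where "lam' = emp_update E X Cv Ce \<eta> (e, i) lam"
  define S where "S = Smarg X Ce \<eta> lam e i"
  define mu where "mu = muV E X Cv \<eta> lam i"
  define \<delta> where "\<delta> = (\<lambda>x. 1 / (2 * \<eta>) * ln (S x / mu x))"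
  define BC where "BC = (\<Sum>x\<in>X. sqrt (S x * mu x))"
  have Sp: "x \<in> X \<Longrightarrow> S x > 0" for x unfolding S_def by (rule Smarg_pos)
  have mp: "mu x > 0" for x unfolding mu_def by (rule muV_pos)
  have l1: "lam' e i x = lam e i x + \<delta> x" for x
    unfolding lam'_def emp_update_def \<delta>_def S_def mu_def by simp
  have l2: "lam' e' j x = lam e' j x" if "e' \<noteq> e \<or> j \<noteq> i" for e' j x
    using that unfolding lam'_def emp_update_def by auto
  obtain j where j: "j \<in> ends e" "j \<noteq> i"
  proof (cases "i = fst e")
    case True thus ?thesis using that[of "snd e"] fs[OF e] by (simp add: ends_def)
  next
    case False thus ?thesis using that[of "fst e"] by (simp add: ends_def)
  qed
  have iV: "i \<in> V" using ends_V[OF e] i by auto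
  have ein: "e \<in> nbr E i" using e i by (simp add: in_nbr)
  have BCp: "BC > 0" and BCb: "(N1 lam e i)\<^sup>2 / (4 * \<eta>) \<le> - (2 / \<eta>) * ln BC"
    using bc_bound[of BC lam e i] unfolding BC_def S_def mu_def by auto
  have v: "ln (ZV lam' j') - ln (ZV lam j') = (if j' = i then ln BC else 0)" for j'
  proof (cases "j' = i")
    case True
    have "(\<Sum>e'\<in>nbr E i. lam' e' i x) = (\<Sum>e'\<in>nbr E i. lam e' i x) + \<delta> x" for x
    proof -
      have "(\<Sum>e'\<in>nbr E i. lam' e' i x) = (\<Sum>e'\<in>nbr E i. lam e' i x + (if e' = e then \<delta> x else 0))"
        using l1 l2 by (intro sum.cong refl) auto
      also have "\<dots> = (\<Sum>e'\<in>nbr E i. lam e' i x) + \<delta> x"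
        using ein fin_nbr by (simp add: sum.distrib)
      finally show ?thesis .
    qed
    hence "ZV lam' i = ZV lam i * (\<Sum>x\<in>X. mu x * exp (\<eta> * \<delta> x))"
      unfolding mu_def by (rule ZV_change)
    also have "(\<Sum>x\<in>X. mu x * exp (\<eta> * \<delta> x)) = BC"
      unfolding BC_def
    proof (rule sum.cong[OF refl])
      fix x assume x: "x \<in> X"
      have "\<eta> * \<delta> x = ln (S x / mu x) / 2" unfolding \<delta>_def using eta by simp
      hence "exp (\<eta> * \<delta> x) = exp (ln (S x / mu x) / 2)" by (rule arg_cong)
      also have "\<dots> = sqrt (S x / mu x)" using Sp[OF x] mp[of x] by (intro exp_half_ln) simp
      finally have "exp (\<eta> * \<delta> x) = sqrt (S x / mu x)" .
      thus "mu x * exp (\<eta> * \<delta> x) = sqrt (S x * mu x)" using Sp[OF x] mp by (simp add: mul_sqrt_div)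
    qed
    finally show ?thesis using True ZV_pos[of lam i] BCp by (simp add: ln_mult)
  next
    case False
    have "ZV lam' j' = ZV lam j'" by (rule ZV_same) (use False l2 in auto)
    thus ?thesis using False by simp
  qed
  have ed: "ln (ZE lam' e') - ln (ZE lam e') = (if e' = e then ln BC else 0)" for e'
  proof (cases "e' = e")
    case True
    have "ZE lam' e = ZE lam e * (\<Sum>x\<in>X. S x * exp (- \<eta> * \<delta> x))"
      unfolding S_def using e i j l1 l2[of e j] by (intro ZE_change) auto
    also have "(\<Sum>x\<in>X. S x * exp (- \<eta> * \<delta> x)) = BC"
      unfolding BC_def
    proof (rule sum.cong[OF refl])
      fix x assume x: "x \<in> X"
      have "- \<eta> * \<delta> x = ln (mu x / S x) / 2" unfolding \<delta>_def using eta Sp[OF x] mp by (simp add: ln_div)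
      hence "exp (- \<eta> * \<delta> x) = exp (ln (mu x / S x) / 2)" by (rule arg_cong)
      also have "\<dots> = sqrt (mu x / S x)" using Sp[OF x] mp[of x] by (intro exp_half_ln) simp
      finally have "exp (- \<eta> * \<delta> x) = sqrt (mu x / S x)" .
      thus "S x * exp (- \<eta> * \<delta> x) = sqrt (S x * mu x)" using Sp[OF x] mp by (simp add: mul_sqrt_div mult.commute)
    qed
    finally show ?thesis using True ZE_pos[of lam e] BCp by (simp add: ln_mult)
  next
    case False
    have "ZE lam' e' = ZE lam e'" by (rule ZE_same) (use False l2 in auto)
    thus ?thesis using False by simp
  qed
  have "gd lam' - gd lam = - (1/\<eta>) * (ln BC + ln BC)"
    unfolding gd_diff v ed using iV e finV finE by simp
  hence "gd lam' - gd lam = - (2 / \<eta>) * ln BC" by simp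
  thus ?thesis using BCb unfolding lam'_def by linarith
qed


lemma smp_progress:
  assumes iV: "i \<in> V" and e0: "e0 \<in> nbr E i"
  shows "gd lam + (N1 lam e0 i)\<^sup>2 / (4 * \<eta>) \<le> gd (smp_update E X Cv Ce \<eta> i lam)"
proof -
  define lam' where "lam' = smp_update E X Cv Ce \<eta> i lam"
  define N where "N = nbr E i"
  define kk where "kk = real (card N)"
  define S where "S = (\<lambda>e. Smarg X Ce \<eta> lam e i)"
  define mu where "mu = muV E X Cv \<eta> lam i"
  define P where "P = (\<lambda>x. mu x * (\<Prod>e\<in>N. S e x))"
  define \<delta> where "\<delta> = (\<lambda>e x. 1 / \<eta> * ln (S e x) - 1 / (\<eta> * (kk + 1)) * ln (P x))"
  define G where "G = (\<lambda>x. exp (ln (P x) / (kk + 1)))"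
  define T where "T = (\<Sum>x\<in>X. G x)"
  define BC where "BC = (\<Sum>x\<in>X. sqrt (S e0 x * mu x))"
  have finN: "finite N" unfolding N_def by (rule fin_nbr)
  have NE: "N \<subseteq> E" unfolding N_def by (rule nbr_sub)
  have e0N: "e0 \<in> N" using e0 by (simp add: N_def)
  have cpos: "card N > 0" using finN e0N by (auto simp: card_gt_0_iff)
  have kk1: "kk \<ge> 1" unfolding kk_def using cpos by simp
  have Sp: "x \<in> X \<Longrightarrow> S e x > 0" for e x unfolding S_def by (rule Smarg_pos)
  have mp: "mu x > 0" for x unfolding mu_def by (rule muV_pos)
  have lnP: "ln (P x) = ln (mu x) + (\<Sum>e\<in>N. ln (S e x))" if x: "x \<in> X" for x
  proof -
    have "(\<Prod>e\<in>N. S e x) > 0" using Sp[OF x] by (intro prod_pos) (auto intro: less_imp_le)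
    hence "ln (P x) = ln (mu x) + ln (\<Prod>e\<in>N. S e x)" unfolding P_def using mp[of x] by (simp add: ln_mult)
    also have "ln (\<Prod>e\<in>N. S e x) = (\<Sum>e\<in>N. ln (S e x))"
    proof (rule ln_prod[OF finN])
      fix e show "S e x \<noteq> 0" using Sp[OF x, of e] by simp
    qed
    finally show ?thesis .
  qed
  have l1: "e \<in> N \<Longrightarrow> lam' e i x = lam e i x + \<delta> e x" for e x
    unfolding lam'_def smp_update_def \<delta>_def S_def P_def mu_def kk_def N_def by simp
  have l2: "e \<notin> N \<or> j \<noteq> i \<Longrightarrow> lam' e j x = lam e j x" for e j x
    unfolding lam'_def smp_update_def N_def by auto
  have c1: "\<eta> * (1/\<eta>) = 1" using eta by simp
  have ek: "\<eta> * (kk + 1) \<noteq> 0" using eta kk1 by simp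
  have c2: "\<eta> * (1 / (\<eta> * (kk + 1))) = 1 / (kk + 1)" using eta kk1 ek by (simp add: field_simps)
  have d1: "\<eta> * \<delta> e x = ln (S e x) - ln (P x) / (kk + 1)" for e x
  proof -
    have "\<eta> * \<delta> e x = (\<eta> * (1/\<eta>)) * ln (S e x) - (\<eta> * (1 / (\<eta> * (kk + 1)))) * ln (P x)"
      unfolding \<delta>_def by (simp only: right_diff_distrib mult.assoc)
    thus ?thesis unfolding c1 c2 by simp
  qed
  have Gp: "G x > 0" for x unfolding G_def by simp
  have Tp: "T > 0" unfolding T_def using finX Xne Gp by (intro sum_pos) auto
  have v: "ln (ZV lam' j) - ln (ZV lam j) = (if j = i then ln T else 0)" for j
  proof (cases "j = i")
    case True
    have "(\<Sum>e\<in>nbr E i. lam' e i x) = (\<Sum>e\<in>nbr E i. lam e i x) + (\<Sum>e\<in>N. \<delta> e x)" for x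
      unfolding N_def[symmetric] using l1 by (simp add: sum.distrib)
    hence "ZV lam' i = ZV lam i * (\<Sum>x\<in>X. mu x * exp (\<eta> * (\<Sum>e\<in>N. \<delta> e x)))"
      unfolding mu_def by (rule ZV_change)
    also have "(\<Sum>x\<in>X. mu x * exp (\<eta> * (\<Sum>e\<in>N. \<delta> e x))) = T"
      unfolding T_def
    proof (rule sum.cong[OF refl])
      fix x assume x: "x \<in> X"
      have "\<eta> * (\<Sum>e\<in>N. \<delta> e x) = (\<Sum>e\<in>N. ln (S e x)) - kk * ln (P x) / (kk + 1)"
      proof -
        have "\<eta> * (\<Sum>e\<in>N. \<delta> e x) = (\<Sum>e\<in>N. \<eta> * \<delta> e x)" by (simp add: sum_distrib_left)
        also have "\<dots> = (\<Sum>e\<in>N. ln (S e x)) - kk * (ln (P x) / (kk + 1))"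
          unfolding d1 by (simp add: sum_subtractf kk_def)
        finally show ?thesis by simp
      qed
      hence "ln (mu x) + \<eta> * (\<Sum>e\<in>N. \<delta> e x) = ln (P x) / (kk + 1)"
        using lnP[OF x] kk1 by (simp add: field_simps)
      hence "exp (ln (mu x) + \<eta> * (\<Sum>e\<in>N. \<delta> e x)) = G x" unfolding G_def by simp
      thus "mu x * exp (\<eta> * (\<Sum>e\<in>N. \<delta> e x)) = G x" using mp[of x] by (simp add: exp_add)
    qed
    finally show ?thesis using True ZV_pos[of lam i] Tp by (simp add: ln_mult)
  next
    case False
    have "ZV lam' j = ZV lam j" by (rule ZV_same) (use False l2 in auto)
    thus ?thesis using False by simp
  qed
  have ed: "ln (ZE lam' e) - ln (ZE lam e) = (if e \<in> N then ln T else 0)" if eE: "e \<in> E" for e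
  proof (cases "e \<in> N")
    case True
    have ie: "i \<in> ends e" using True by (simp add: N_def in_nbr)
    obtain j where j: "j \<in> ends e" "j \<noteq> i"
    proof (cases "i = fst e")
      case True thus ?thesis using that[of "snd e"] fs[OF eE] by (simp add: ends_def)
    next
      case False thus ?thesis using that[of "fst e"] by (simp add: ends_def)
    qed
    have "ZE lam' e = ZE lam e * (\<Sum>x\<in>X. S e x * exp (- \<eta> * \<delta> e x))"
      unfolding S_def using eE ie j l1[OF True] l2[of e j] by (intro ZE_change) auto
    also have "(\<Sum>x\<in>X. S e x * exp (- \<eta> * \<delta> e x)) = T"
      unfolding T_def
    proof (rule sum.cong[OF refl])
      fix x assume x: "x \<in> X"
      have "ln (S e x) + - \<eta> * \<delta> e x = ln (P x) / (kk + 1)"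
        using d1[of e x] by simp
      hence "exp (ln (S e x) + - \<eta> * \<delta> e x) = G x" unfolding G_def by simp
      moreover have "exp (ln (S e x) + - \<eta> * \<delta> e x) = S e x * exp (- \<eta> * \<delta> e x)"
        using Sp[OF x, of e] by (simp only: exp_add exp_ln)
      ultimately show "S e x * exp (- \<eta> * \<delta> e x) = G x" by simp
    qed
    finally show ?thesis using True ZE_pos[of lam e] Tp by (simp add: ln_mult)
  next
    case False
    have "ZE lam' e = ZE lam e" by (rule ZE_same) (use False l2 in auto)
    thus ?thesis using False by simp
  qed
  have "gd lam' - gd lam = - (1/\<eta>) * (ln T + (\<Sum>e\<in>E. if e \<in> N then ln T else 0))"
    unfolding gd_diff v using ed iV finV by simp
  also have "(\<Sum>e\<in>E. if e \<in> N then ln T else 0) = kk * ln T"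
  proof -
    have "(\<Sum>e\<in>E. if e \<in> N then ln T else 0) = sum (\<lambda>_. ln T) (E \<inter> N)"
      using sum.inter_restrict[OF finE, of "\<lambda>_. ln T" N] by simp
    also have "E \<inter> N = N" using NE by auto
    finally show ?thesis by (simp add: kk_def)
  qed
  finally have gdd0: "gd lam' - gd lam = - (1/\<eta>) * (ln T + kk * ln T)" .
  have "- (1/\<eta>) * (ln T + kk * ln T) = - (kk + 1) * ln T / \<eta>" using eta by (simp add: field_simps)
  with gdd0 have gdd: "gd lam' - gd lam = - (kk + 1) * ln T / \<eta>" by simp
  define N' where "N' = N - {e0}"
  have cN': "real (card N') = kk - 1" unfolding N'_def kk_def using finN e0N cpos by (simp add: of_nat_diff)
  have Gle: "G x \<le> (2 * sqrt (S e0 x * mu x) + (\<Sum>e\<in>N'. S e x)) / (kk + 1)" if x: "x \<in> X" for x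
  proof -
    define g where "g = sqrt (S e0 x * mu x)"
    define A where "A = (2 * g + (\<Sum>e\<in>N'. S e x)) / (kk + 1)"
    have g0: "g > 0" unfolding g_def using Sp[OF x] mp[of x] by simp
    have A0: "A > 0" unfolding A_def using g0 kk1 Sp[OF x] by (intro divide_pos_pos add_pos_nonneg sum_nonneg) (auto intro: less_imp_le)
    have hA: "2 * g + (\<Sum>e\<in>N'. S e x) = (real (card N') + 2) * A"
    proof -
      have "kk - 1 + 2 = kk + 1" by simp
      moreover have "kk + 1 \<noteq> 0" using kk1 by simp
      ultimately show ?thesis unfolding A_def cN' by (simp add: field_simps)
    qed
    have am: "2 * ln g + (\<Sum>e\<in>N'. ln (S e x)) \<le> (real (card N') + 2) * ln A"
      using amgm_ln[of N' "\<lambda>e. S e x" g A] finN g0 A0 hA Sp[OF x] unfolding N'_def by auto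
    have "2 * ln g = ln (S e0 x) + ln (mu x)"
    proof -
      have "ln (sqrt (S e0 x * mu x)) = ln (S e0 x * mu x) / 2"
        using Sp[OF x, of e0] mp[of x] by (intro ln_sqrt) simp
      moreover have "ln (S e0 x * mu x) = ln (S e0 x) + ln (mu x)"
        using Sp[OF x, of e0] mp[of x] by (simp add: ln_mult)
      ultimately show ?thesis unfolding g_def by simp
    qed
    moreover have "(\<Sum>e\<in>N. ln (S e x)) = ln (S e0 x) + (\<Sum>e\<in>N'. ln (S e x))"
      unfolding N'_def using finN e0N by (simp add: sum.remove)
    ultimately have "ln (P x) \<le> (kk + 1) * ln A" using am lnP[OF x] cN' by (simp add: add.commute)
    hence "ln (P x) / (kk + 1) \<le> ln A" using kk1 by (simp add: field_simps)
    hence "G x \<le> exp (ln A)" unfolding G_def by simp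
    thus ?thesis using A0 unfolding A_def g_def by simp
  qed
  have Tle: "T \<le> (2 * BC + (kk - 1)) / (kk + 1)"
  proof -
    have "T \<le> (\<Sum>x\<in>X. (2 * sqrt (S e0 x * mu x) + (\<Sum>e\<in>N'. S e x)) / (kk + 1))"
      unfolding T_def using Gle by (intro sum_mono) auto
    also have "\<dots> = (2 * BC + (\<Sum>e\<in>N'. \<Sum>x\<in>X. S e x)) / (kk + 1)"
      unfolding BC_def by (simp add: sum_divide_distrib[symmetric] sum.distrib sum_distrib_left sum.swap[of _ N' X])
    also have "(\<Sum>e\<in>N'. \<Sum>x\<in>X. S e x) = kk - 1"
      using cN' by (simp add: S_def Smarg_sum)
    finally show ?thesis .
  qed
  have hel: "(N1 lam e0 i)\<^sup>2 \<le> 8 * (1 - BC)"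
    unfolding BC_def N1_def slack_def S_def mu_def
    by (rule hellinger[OF finX]) (auto intro: less_imp_le Smarg_pos muV_pos simp: Smarg_sum muV_sum)
  have "ln T \<le> T - 1" using Tp by (rule ln_le_minus_one)
  hence "(kk + 1) * ln T \<le> (kk + 1) * (T - 1)" using kk1 by (intro mult_left_mono) auto
  moreover have "(kk + 1) * T \<le> 2 * BC + (kk - 1)" using Tle kk1 by (simp add: field_simps)
  ultimately have "(N1 lam e0 i)\<^sup>2 \<le> - 4 * ((kk + 1) * ln T)" using hel by (simp add: algebra_simps)
  hence "(N1 lam e0 i)\<^sup>2 / (4 * \<eta>) \<le> - (kk + 1) * ln T / \<eta>"
    using eta by (simp add: field_simps)
  thus ?thesis using gdd unfolding lam'_def by linarith
qed

end


definition runL :: "('b \<Rightarrow> dual \<Rightarrow> dual) \<Rightarrow> dual \<Rightarrow> 'b list \<Rightarrow> nat \<Rightarrow> dual" where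
  "runL upd lam0 bs k = foldl (\<lambda>lam b. upd b lam) lam0 (take k bs)"

lemma run_runL: "run upd bs k = runL upd (\<lambda>_ _ _. 0) bs k"
  by (simp add: run_def runL_def)

lemma runL_0: "runL upd lam0 bs 0 = lam0" by (simp add: runL_def)
lemma runL_Suc: "runL upd lam0 (b # bs) (Suc k) = runL upd (upd b lam0) bs k" by (simp add: runL_def)

lemma fin_seq: "finite (set_pmf p) \<Longrightarrow> finite (set_pmf (seq_pmf K p))"
  by (induction K) auto

lemma exp_sum: "finite (set_pmf p) \<Longrightarrow> measure_pmf.expectation p f = (\<Sum>a\<in>set_pmf p. pmf p a * (f a :: real))"
  by (subst integral_measure_pmf[of "set_pmf p"]) auto

lemma sum_pmf1: "finite (set_pmf p) \<Longrightarrow> (\<Sum>a\<in>set_pmf p. pmf p a) = 1"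
  by (rule sum_pmf_eq_1) auto

lemma exp_mono: "finite (set_pmf p) \<Longrightarrow> (\<And>a. a \<in> set_pmf p \<Longrightarrow> f a \<le> g a) \<Longrightarrow>
    measure_pmf.expectation p f \<le> measure_pmf.expectation p (g :: _ \<Rightarrow> real)"
  by (simp add: exp_sum sum_mono mult_left_mono)

lemma exp_affine: "finite (set_pmf p) \<Longrightarrow>
    measure_pmf.expectation p (\<lambda>a. c + b * f a) = c + b * measure_pmf.expectation p (f :: _ \<Rightarrow> real)"
proof -
  assume fp: "finite (set_pmf p)"
  have "(\<Sum>a\<in>set_pmf p. pmf p a * (c + b * f a)) = c * (\<Sum>a\<in>set_pmf p. pmf p a) + b * (\<Sum>a\<in>set_pmf p. pmf p a * f a)"
    by (simp add: distrib_left sum.distrib sum_distrib_left sum_distrib_right algebra_simps)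
  thus ?thesis using fp by (simp add: exp_sum sum_pmf1)
qed

lemma exp_seq_Suc:
  assumes fp: "finite (set_pmf p)"
  shows "measure_pmf.expectation (seq_pmf (Suc K) p) h
       = (\<Sum>a\<in>set_pmf p. pmf p a * measure_pmf.expectation (seq_pmf K p) (\<lambda>bs. h (a # bs) :: real))"
  by (simp add: pmf_expectation_bind[OF fp] fin_seq[OF fp])

lemma descent:
  fixes F Qf :: "dual \<Rightarrow> real" and upd :: "'b \<Rightarrow> dual \<Rightarrow> dual" and p :: "'b pmf"
  assumes fp: "finite (set_pmf p)" and kap: "\<kappa> > 0"
    and FG: "\<And>lam. F lam \<le> G"
    and prog: "\<And>lam. F lam + \<kappa> * Qf lam \<le> measure_pmf.expectation p (\<lambda>b. F (upd b lam))"
  shows "measure_pmf.expectation (seq_pmf K p) (\<lambda>bs. \<Sum>k<K. Qf (runL upd lam0 bs k)) \<le> (G - F lam0) / \<kappa>"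
proof (induction K arbitrary: lam0)
  case 0
  thus ?case using FG[of lam0] kap by simp
next
  case (Suc K)
  have "measure_pmf.expectation (seq_pmf (Suc K) p) (\<lambda>bs. \<Sum>k<Suc K. Qf (runL upd lam0 bs k))
     = (\<Sum>a\<in>set_pmf p. pmf p a * measure_pmf.expectation (seq_pmf K p)
           (\<lambda>bs. Qf lam0 + 1 * (\<Sum>k<K. Qf (runL upd (upd a lam0) bs k))))"
  proof -
    have h: "(\<Sum>k<Suc K. Qf (runL upd lam0 (a # bs) k)) = Qf lam0 + 1 * (\<Sum>k<K. Qf (runL upd (upd a lam0) bs k))" for a bs
      by (simp only: sum.lessThan_Suc_shift runL_0 runL_Suc mult_1)
    show ?thesis unfolding exp_seq_Suc[OF fp] h ..
  qed
  also have "\<dots> = (\<Sum>a\<in>set_pmf p. pmf p a * (Qf lam0 + measure_pmf.expectation (seq_pmf K p)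
           (\<lambda>bs. \<Sum>k<K. Qf (runL upd (upd a lam0) bs k))))"
    by (simp only: exp_affine[OF fin_seq[OF fp]]) simp
  also have "\<dots> \<le> (\<Sum>a\<in>set_pmf p. pmf p a * (Qf lam0 + (G - F (upd a lam0)) / \<kappa>))"
    using Suc.IH by (intro sum_mono mult_left_mono) auto
  also have "\<dots> = Qf lam0 + (G - measure_pmf.expectation p (\<lambda>b. F (upd b lam0))) / \<kappa>"
  proof -
    have "(\<Sum>a\<in>set_pmf p. pmf p a * (Qf lam0 + (G - F (upd a lam0)) / \<kappa>))
        = (Qf lam0 + G / \<kappa>) * (\<Sum>a\<in>set_pmf p. pmf p a) - (\<Sum>a\<in>set_pmf p. pmf p a * F (upd a lam0)) / \<kappa>"
      by (simp add: sum_distrib_left sum_distrib_right sum_subtractf sum.distrib sum_divide_distrib diff_divide_distrib algebra_simps)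
    thus ?thesis using fp by (simp add: exp_sum sum_pmf1 diff_divide_distrib)
  qed
  also have "\<dots> \<le> Qf lam0 + (G - (F lam0 + \<kappa> * Qf lam0)) / \<kappa>"
    using prog[of lam0] kap by (simp add: divide_right_mono)
  also have "\<dots> = (G - F lam0) / \<kappa>" using kap by (simp add: field_simps)
  finally show ?case .
qed


context mrf begin

abbreviation "mm \<equiv> real (card E)"
abbreviation "nn \<equiv> real (card V)"

lemma mm1: "mm \<ge> 1" using Ene finE by (simp add: Suc_leI card_gt_0_iff)

lemma blocks_Sigma: "{(e, i). e \<in> E \<and> i \<in> ends e} = Sigma E ends" by auto

lemma fin_blocks: "finite (set_pmf (emp_blocks E))"
proof -
  have f: "finite (Sigma E ends)" using finE by (simp add: ends_def)
  have ne: "Sigma E ends \<noteq> {}"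
  proof -
    obtain e where "e \<in> E" using Ene by auto
    hence "(e, fst e) \<in> Sigma E ends" by (simp add: ends_def)
    thus ?thesis by auto
  qed
  show ?thesis unfolding emp_blocks_def blocks_Sigma using f ne by simp
qed

lemma emp_expected:
  "gd lam + (1 / (8 * mm * \<eta>)) * Q lam
     \<le> measure_pmf.expectation (emp_blocks E) (\<lambda>b. gd (emp_update E X Cv Ce \<eta> b lam))"
proof -
  have f: "finite (Sigma E ends)" using finE by (simp add: ends_def)
  have ne: "Sigma E ends \<noteq> {}"
  proof -
    obtain e where "e \<in> E" using Ene by auto
    hence "(e, fst e) \<in> Sigma E ends" by (simp add: ends_def)
    thus ?thesis by auto
  qed
  have fe: "\<forall>e\<in>E. finite (ends e)" by (simp add: ends_def)
  have card: "real (card (Sigma E ends)) = 2 * mm"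
    using finE fe by (simp add: card_ends)
  have e1: "measure_pmf.expectation (emp_blocks E) (\<lambda>b. gd (emp_update E X Cv Ce \<eta> b lam))
      = (\<Sum>b\<in>Sigma E ends. gd (emp_update E X Cv Ce \<eta> b lam)) / (2 * mm)"
    unfolding emp_blocks_def blocks_Sigma integral_pmf_of_set[OF ne f] card by (rule refl)
  have e2: "(\<Sum>b\<in>Sigma E ends. gd (emp_update E X Cv Ce \<eta> b lam))
      = (\<Sum>e\<in>E. \<Sum>i\<in>ends e. gd (emp_update E X Cv Ce \<eta> (e, i) lam))"
    using sum.Sigma[OF finE fe, of "\<lambda>e i. gd (emp_update E X Cv Ce \<eta> (e, i) lam)"] by (simp add: split_beta)
  have e3: "(\<Sum>e\<in>E. \<Sum>i\<in>ends e. gd lam + (N1 lam e i)\<^sup>2 / (4 * \<eta>))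
      \<le> (\<Sum>e\<in>E. \<Sum>i\<in>ends e. gd (emp_update E X Cv Ce \<eta> (e, i) lam))"
    using emp_progress by (intro sum_mono) auto
  have h: "(\<Sum>e\<in>E. \<Sum>i\<in>ends e. gd lam + (N1 lam e i)\<^sup>2 / (4 * \<eta>)) / (2 * mm)
     \<le> measure_pmf.expectation (emp_blocks E) (\<lambda>b. gd (emp_update E X Cv Ce \<eta> b lam))"
    unfolding e1 e2 using mm1 e3 by (intro divide_right_mono) auto
  have "(\<Sum>e\<in>E. \<Sum>i\<in>ends e. gd lam + (N1 lam e i)\<^sup>2 / (4 * \<eta>))
      = 2 * mm * gd lam + Q lam / (4 * \<eta>)"
    unfolding Q_def' by (simp add: sum.distrib card_ends sum_divide_distrib)
  with h have "(2 * mm * gd lam + Q lam / (4 * \<eta>)) / (2 * mm)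
     \<le> measure_pmf.expectation (emp_blocks E) (\<lambda>b. gd (emp_update E X Cv Ce \<eta> b lam))" by simp
  moreover have "(2 * mm * gd lam + Q lam / (4 * \<eta>)) / (2 * mm) = gd lam + (1 / (8 * mm * \<eta>)) * Q lam"
    using mm1 eta by (simp add: field_simps)
  ultimately show ?thesis by simp
qed

definition wS :: "nat \<Rightarrow> real" where
  "wS i = (if i \<in> V then real (card (nbr E i)) / (\<Sum>j\<in>V. real (card (nbr E j))) else 0)"

lemma wS_nonneg: "wS i \<ge> 0" unfolding wS_def by (simp add: sum_nonneg)

lemma wS_sum: "(\<Sum>i\<in>V. wS i) = 1"
proof -
  have D: "(\<Sum>j\<in>V. real (card (nbr E j))) = 2 * mm" by (rule sum_nbr_card)
  show ?thesis using mm1 unfolding wS_def D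
    by (simp add: sum_divide_distrib[symmetric] sum_nbr_card)
qed

lemma pmf_smp: "pmf (smp_blocks V E) i = wS i"
proof -
  have nn: "\<And>x. 0 \<le> wS x" by (rule wS_nonneg)
  have "(\<integral>\<^sup>+x. ennreal (wS x) \<partial>count_space UNIV) = (\<integral>\<^sup>+x. ennreal (wS x) \<partial>count_space V)"
    by (subst nn_integral_count_space_indicator) (auto intro!: nn_integral_cong simp: wS_def split: split_indicator)
  also have "\<dots> = (\<Sum>x\<in>V. ennreal (wS x))" by (rule nn_integral_count_space_finite[OF finV])
  also have "\<dots> = ennreal (\<Sum>x\<in>V. wS x)" using nn by (simp add: sum_ennreal)
  finally have pr: "(\<integral>\<^sup>+x. ennreal (wS x) \<partial>count_space UNIV) = 1" using wS_sum by simp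
  show ?thesis unfolding smp_blocks_def wS_def[symmetric]
    using pmf_embed_pmf[OF nn pr] unfolding wS_def[symmetric] .
qed

lemma set_smp: "set_pmf (smp_blocks V E) \<subseteq> V"
  using pmf_smp by (auto simp: set_pmf_eq wS_def)

lemma fin_smp: "finite (set_pmf (smp_blocks V E))"
  using set_smp finV by (rule finite_subset)

lemma smp_expected:
  "gd lam + (1 / (8 * mm * \<eta>)) * Q lam
     \<le> measure_pmf.expectation (smp_blocks V E) (\<lambda>i. gd (smp_update E X Cv Ce \<eta> i lam))"
proof -
  have D: "(\<Sum>j\<in>V. real (card (nbr E j))) = 2 * mm" by (rule sum_nbr_card)
  have ex: "measure_pmf.expectation (smp_blocks V E) (\<lambda>i. gd (smp_update E X Cv Ce \<eta> i lam))
      = (\<Sum>i\<in>V. wS i * gd (smp_update E X Cv Ce \<eta> i lam))"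
    by (subst integral_measure_pmf[of V]) (use finV set_smp in \<open>auto simp: pmf_smp\<close>)
  have pi: "(\<Sum>e\<in>nbr E i. gd lam + (N1 lam e i)\<^sup>2 / (4 * \<eta>)) / (2 * mm)
       \<le> wS i * gd (smp_update E X Cv Ce \<eta> i lam)" if i: "i \<in> V" for i
  proof -
    have "(\<Sum>e\<in>nbr E i. gd lam + (N1 lam e i)\<^sup>2 / (4 * \<eta>))
        \<le> (\<Sum>e\<in>nbr E i. gd (smp_update E X Cv Ce \<eta> i lam))"
      using smp_progress[OF i] by (intro sum_mono) auto
    also have "\<dots> = real (card (nbr E i)) * gd (smp_update E X Cv Ce \<eta> i lam)" by simp
    finally show ?thesis using i mm1 unfolding wS_def D by (simp add: divide_right_mono)
  qed
  have "(\<Sum>i\<in>V. (\<Sum>e\<in>nbr E i. gd lam + (N1 lam e i)\<^sup>2 / (4 * \<eta>)) / (2 * mm))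
      = (\<Sum>e\<in>E. \<Sum>i\<in>ends e. gd lam + (N1 lam e i)\<^sup>2 / (4 * \<eta>)) / (2 * mm)"
    by (simp add: sum_divide_distrib[symmetric] double_count)
  also have "(\<Sum>e\<in>E. \<Sum>i\<in>ends e. gd lam + (N1 lam e i)\<^sup>2 / (4 * \<eta>))
      = 2 * mm * gd lam + Q lam / (4 * \<eta>)"
    unfolding Q_def' by (simp add: sum.distrib card_ends sum_divide_distrib)
  also have "(2 * mm * gd lam + Q lam / (4 * \<eta>)) / (2 * mm) = gd lam + (1 / (8 * mm * \<eta>)) * Q lam"
    using mm1 eta by (simp add: field_simps)
  finally have "gd lam + (1 / (8 * mm * \<eta>)) * Q lam
      = (\<Sum>i\<in>V. (\<Sum>e\<in>nbr E i. gd lam + (N1 lam e i)\<^sup>2 / (4 * \<eta>)) / (2 * mm))" ..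
  also have "\<dots> \<le> (\<Sum>i\<in>V. wS i * gd (smp_update E X Cv Ce \<eta> i lam))"
    using pi by (intro sum_mono) auto
  finally show ?thesis using ex by simp
qed

lemma gd0_lb: "gd lam0 \<ge> - (nn + mm) * Cn - (nn + 2 * mm) * ln dd / \<eta>"
  if "lam0 = (\<lambda>_ _ _. 0)"
proof -
  have "gd lam0 = Lagr lam0 (mulam lam0)" by (simp add: lagr_eq)
  also have "\<dots> = cost V E X Cv Ce (mulam lam0) + Ent (mulam lam0) / \<eta>"
    unfolding Lagr_def that by simp
  finally have g: "gd lam0 = cost V E X Cv Ce (mulam lam0) + Ent (mulam lam0) / \<eta>" .
  have c: "cost V E X Cv Ce (mulam lam0) \<ge> - (nn + mm) * Cn"
    using cost_bound[OF pdist_mulam, of lam0] by (simp add: abs_le_iff algebra_simps)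
  have "- Ent (mulam lam0) / \<eta> \<le> (nn + 2 * mm) * ln dd / \<eta>"
    using divide_right_mono[OF pdist_Ent_ge[OF pdist_mulam, of lam0], of \<eta>] eta by simp
  thus ?thesis using g c by (simp add: algebra_simps)
qed

end


lemma frac_cross: "(b::real) > 0 \<Longrightarrow> e > 0 \<Longrightarrow> a * e \<le> c * b \<Longrightarrow> a / b \<le> c / e"
proof -
  assume b: "b > 0" and e: "e > 0" and h: "a * e \<le> c * b"
  have "a / b = (a * e) / (b * e)" using e by simp
  also have "\<dots> \<le> (c * b) / (b * e)" using h b e by (intro divide_right_mono) auto
  also have "\<dots> = c / e" using b by simp
  finally show ?thesis .
qed

lemma arith_final:
  fixes m n d L C \<epsilon> Kr \<eta> A s :: real
  assumes m: "m \<ge> 1" and n: "n \<ge> 0" and d: "d \<ge> 2" and L: "L > 0" and C: "C > 0" and e: "\<epsilon> > 0"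
    and Kr: "Kr > 0" and eta: "\<eta> = 4 * (m + n) * L / \<epsilon>"
    and Kb: "Kr \<ge> 9600 * m * d\<^sup>2 * (m + n) ^ 4 * C ^ 3 / \<epsilon> ^ 3 * L"
    and A: "A = 2 * d * (n + m) + 6 * m" and s: "s = \<epsilon> / (2 * C * A)"
  shows "(1 / Kr) * (24 * m * \<eta> * (n + m) * C) \<le> s\<^sup>2"
proof -
  define M where "M = m + n"
  have M0: "M > 0" unfolding M_def using m n by simp
  have A0: "A > 0" unfolding A using m n d by (simp add: add_nonneg_pos)
  have "6 * m \<le> 3 * d * M"
  proof -
    have "3 * 2 * M \<le> 3 * d * M" using d M0 by (intro mult_right_mono) auto
    moreover have "6 * m \<le> 6 * M" unfolding M_def using n by simp
    ultimately show ?thesis by simp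
  qed
  hence A5: "A \<le> 5 * d * M" unfolding A M_def by (simp add: algebra_simps)
  have A2: "A\<^sup>2 \<le> 25 * d\<^sup>2 * M\<^sup>2"
  proof -
    have "A\<^sup>2 \<le> (5 * d * M)\<^sup>2" using A0 A5 by (intro power_mono) auto
    thus ?thesis by (simp add: power_mult_distrib)
  qed
  have key1: "384 * m * M\<^sup>2 * L * C ^ 3 * A\<^sup>2 \<le> 384 * m * M\<^sup>2 * L * C ^ 3 * (25 * d\<^sup>2 * M\<^sup>2)"
    using A2 m L C by (intro mult_left_mono) auto
  have eq1: "384 * m * M\<^sup>2 * L * C ^ 3 * (25 * d\<^sup>2 * M\<^sup>2) = 9600 * m * d\<^sup>2 * M ^ 4 * C ^ 3 * L"
    by algebra
  have key2: "\<epsilon> ^ 3 * Kr \<ge> 9600 * m * d\<^sup>2 * M ^ 4 * C ^ 3 * L"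
  proof -
    have "\<epsilon> ^ 3 * Kr \<ge> \<epsilon> ^ 3 * (9600 * m * d\<^sup>2 * M ^ 4 * C ^ 3 / \<epsilon> ^ 3 * L)"
      using Kb e unfolding M_def by (intro mult_left_mono) auto
    thus ?thesis using e by simp
  qed
  have key: "384 * m * M\<^sup>2 * L * C ^ 3 * A\<^sup>2 \<le> \<epsilon> ^ 3 * Kr"
    using key1 key2 eq1 by linarith
  have lhs: "(1 / Kr) * (24 * m * \<eta> * (n + m) * C) = (96 * m * M\<^sup>2 * L * C) / (\<epsilon> * Kr)"
  proof -
    have "(1 / Kr) * (24 * m * \<eta> * (n + m) * C) = (24 * m * (4 * M * L) * M * C) / (\<epsilon> * Kr)"
      unfolding eta M_def by (simp add: add.commute)
    also have "24 * m * (4 * M * L) * M * C = 96 * m * M\<^sup>2 * L * C" by algebra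
    finally show ?thesis .
  qed
  have rhs: "s\<^sup>2 = \<epsilon>\<^sup>2 / (4 * C\<^sup>2 * A\<^sup>2)" unfolding s by (simp add: power_mult_distrib power_divide)
  have "96 * m * M\<^sup>2 * L * C * (4 * C\<^sup>2 * A\<^sup>2) \<le> \<epsilon>\<^sup>2 * (\<epsilon> * Kr)"
  proof -
    have q1: "96 * m * M\<^sup>2 * L * C * (4 * C\<^sup>2 * A\<^sup>2) = 384 * m * M\<^sup>2 * L * C ^ 3 * A\<^sup>2" by algebra
    have q2: "\<epsilon>\<^sup>2 * (\<epsilon> * Kr) = \<epsilon> ^ 3 * Kr" by algebra
    show ?thesis unfolding q1 q2 by (rule key)
  qed
  hence "(96 * m * M\<^sup>2 * L * C) / (\<epsilon> * Kr) \<le> \<epsilon>\<^sup>2 / (4 * C\<^sup>2 * A\<^sup>2)"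
    using e Kr C A0 by (intro frac_cross) auto
  thus ?thesis using lhs rhs by simp
qed


lemma exp_const: "finite (set_pmf p) \<Longrightarrow> measure_pmf.expectation p (\<lambda>_. c) = (c::real)"
  by (simp add: exp_sum sum_pmf1 sum_distrib_right[symmetric])

context mrf begin

lemma final_generic:
  fixes upd :: "'b \<Rightarrow> dual \<Rightarrow> dual" and p :: "'b pmf" and \<epsilon> :: real and K :: nat
  assumes fp: "finite (set_pmf p)"
    and prog: "\<And>lam. gd lam + (1 / (8 * mm * \<eta>)) * Q lam \<le> measure_pmf.expectation p (\<lambda>b. gd (upd b lam))"
    and eps: "\<epsilon> > 0" and etadef: "\<eta> = 4 * real (card E + card V) * ln dd / \<epsilon>"
    and Kb: "real K \<ge> 9600 * mm * dd ^ 2 * real (card E + card V) ^ 4 * Cn ^ 3 / \<epsilon> ^ 3 * ln dd"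
  shows "rmp_guarantee V E X Cv Ce \<eta> \<epsilon> K upd p"
  unfolding rmp_guarantee_def
proof (intro allI impI conjI ballI)
  fix sel :: "'b list \<Rightarrow> nat"
  assume hs: "\<forall>bs. sel bs \<le> K \<and> (\<forall>k\<le>K. Q (run upd bs (sel bs)) \<le> Q (run upd bs k))"
  define lh where "lh = (\<lambda>bs. run upd bs (sel bs))"
  show "Proj E X Cv Ce \<eta> (run upd bs (sel bs)) \<in> L2 V E X" for bs using Proj_props by blast
  fix mu assume m: "mu \<in> L2 V E X"
  have fs: "finite (set_pmf (seq_pmf K p))" using fp by (rule fin_seq)
  have L0: "ln dd > 0" using cardX by simp
  have nm: "real (card E + card V) = mm + nn" by simp
  have H: "(nn + 2 * mm) * ln dd / \<eta> \<le> \<epsilon> / 2"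
  proof -
    have ee: "\<epsilon> / 2 * \<eta> = 2 * (mm + nn) * ln dd" unfolding etadef nm using eps by simp
    have "(nn + 2 * mm) * ln dd \<le> 2 * (mm + nn) * ln dd" using L0 by (intro mult_right_mono) auto
    hence "(nn + 2 * mm) * ln dd \<le> \<epsilon> / 2 * \<eta>" using ee by simp
    thus ?thesis using eta by (simp add: pos_divide_le_eq)
  qed
  have cb_mu: "\<bar>cost V E X Cv Ce mu\<bar> \<le> (nn + mm) * Cn" using cost_bound[OF L2_pdist[OF m]] .
  show "measure_pmf.expectation (seq_pmf K p) (\<lambda>bs. cost V E X Cv Ce (Proj E X Cv Ce \<eta> (run upd bs (sel bs))))
        \<le> cost V E X Cv Ce mu + \<epsilon>"
  proof (cases "2 * (nn + mm) * Cn \<le> \<epsilon>")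
    case True
    have "measure_pmf.expectation (seq_pmf K p) (\<lambda>bs. cost V E X Cv Ce (Proj E X Cv Ce \<eta> (run upd bs (sel bs))))
        \<le> measure_pmf.expectation (seq_pmf K p) (\<lambda>_. cost V E X Cv Ce mu + \<epsilon>)"
    proof (rule exp_mono[OF fs])
      fix bs
      have "\<bar>cost V E X Cv Ce (Proj E X Cv Ce \<eta> (run upd bs (sel bs)))\<bar> \<le> (nn + mm) * Cn"
        using cost_bound[OF L2_pdist] Proj_props by blast
      thus "cost V E X Cv Ce (Proj E X Cv Ce \<eta> (run upd bs (sel bs))) \<le> cost V E X Cv Ce mu + \<epsilon>"
        using cb_mu True by (simp add: abs_le_iff algebra_simps)
    qed
    thus ?thesis using exp_const[OF fs] by simp
  next
    case False
    have Cp: "Cn > 0" using False Cn_nonneg eps by (cases "Cn = 0") auto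
    define A where "A = 2 * dd * (nn + mm) + 6 * mm"
    have A0: "A > 0" unfolding A_def using mm1 dd_pos by (simp add: add_nonneg_pos)
    define s where "s = \<epsilon> / (2 * Cn * A)"
    have s0: "s > 0" unfolding s_def using eps Cp A0 by simp
    have Kpos: "real K > 0"
    proof -
      have "0 < 9600 * mm * dd ^ 2 * real (card E + card V) ^ 4 * Cn ^ 3 / \<epsilon> ^ 3 * ln dd"
        using mm1 dd_pos Cp eps L0 Ene finE by simp
      thus ?thesis using Kb by linarith
    qed
    have pw: "cost V E X Cv Ce (Proj E X Cv Ce \<eta> (lh bs))
        \<le> (cost V E X Cv Ce mu + \<epsilon> / 2 + Cn * A * s / 2) + (Cn * A / (2 * s)) * Q (lh bs)" for bs
    proof -
      have "cost V E X Cv Ce (Proj E X Cv Ce \<eta> (lh bs)) \<le> cost V E X Cv Ce mu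
          + (nn + 2 * mm) * ln dd / \<eta> + Cn * A * ((Q (lh bs) / s + s) / 2)"
        using pointwise[OF m s0, of "lh bs"] unfolding A_def .
      moreover have "Cn * A * ((Q (lh bs) / s + s) / 2) = Cn * A * s / 2 + (Cn * A / (2 * s)) * Q (lh bs)"
        using s0 by (simp add: field_simps)
      ultimately show ?thesis using H by linarith
    qed
    have avg: "Q (lh bs) \<le> 0 + (1 / real K) * (\<Sum>k<K. Q (runL upd (\<lambda>_ _ _. 0) bs k))" for bs
    proof -
      have "(\<Sum>k<K. Q (lh bs)) \<le> (\<Sum>k<K. Q (runL upd (\<lambda>_ _ _. 0) bs k))"
        using hs unfolding lh_def run_runL[symmetric] by (intro sum_mono) auto
      hence "real K * Q (lh bs) \<le> (\<Sum>k<K. Q (runL upd (\<lambda>_ _ _. 0) bs k))" by simp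
      thus ?thesis using Kpos by (simp add: field_simps)
    qed
    have kap: "1 / (8 * mm * \<eta>) > 0" using mm1 eta by simp
    have desc: "measure_pmf.expectation (seq_pmf K p) (\<lambda>bs. \<Sum>k<K. Q (runL upd (\<lambda>_ _ _. 0) bs k))
        \<le> (cost V E X Cv Ce mu - gd (\<lambda>_ _ _. 0)) / (1 / (8 * mm * \<eta>))"
      by (rule descent[where F = gd and Qf = Q and upd = upd, OF fp kap weak_dual[OF m] prog])
    have g0: "gd (\<lambda>_ _ _. 0) \<ge> - (nn + mm) * Cn - (nn + 2 * mm) * ln dd / \<eta>" by (rule gd0_lb) simp
    have gap: "cost V E X Cv Ce mu - gd (\<lambda>_ _ _. 0) \<le> 3 * (nn + mm) * Cn"
    proof -
      have c1: "cost V E X Cv Ce mu \<le> (nn + mm) * Cn" using cb_mu by (simp only: abs_le_iff)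
      show ?thesis using g0 H c1 False by linarith
    qed
    have EQ: "measure_pmf.expectation (seq_pmf K p) (\<lambda>bs. Q (lh bs))
        \<le> (1 / real K) * (24 * mm * \<eta> * (nn + mm) * Cn)"
    proof -
      have "measure_pmf.expectation (seq_pmf K p) (\<lambda>bs. Q (lh bs))
          \<le> measure_pmf.expectation (seq_pmf K p) (\<lambda>bs. 0 + (1 / real K) * (\<Sum>k<K. Q (runL upd (\<lambda>_ _ _. 0) bs k)))"
        using avg by (intro exp_mono[OF fs])
      also have "\<dots> = (1 / real K) * measure_pmf.expectation (seq_pmf K p) (\<lambda>bs. \<Sum>k<K. Q (runL upd (\<lambda>_ _ _. 0) bs k))"
        unfolding exp_affine[OF fs] by simp
      also have "\<dots> \<le> (1 / real K) * ((cost V E X Cv Ce mu - gd (\<lambda>_ _ _. 0)) / (1 / (8 * mm * \<eta>)))"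
        using desc Kpos by (intro mult_left_mono) auto
      also have "\<dots> \<le> (1 / real K) * (3 * (nn + mm) * Cn * (8 * mm * \<eta>))"
        using gap Kpos mm1 eta by (intro mult_left_mono) (auto intro: mult_right_mono)
      also have "\<dots> = (1 / real K) * (24 * mm * \<eta> * (nn + mm) * Cn)" by (simp add: algebra_simps)
      finally show ?thesis .
    qed
    have EQs: "measure_pmf.expectation (seq_pmf K p) (\<lambda>bs. Q (lh bs)) \<le> s\<^sup>2"
    proof -
      have "(1 / real K) * (24 * mm * \<eta> * (nn + mm) * Cn) \<le> s\<^sup>2"
      proof (rule arith_final[of mm nn dd "ln dd" Cn \<epsilon> "real K" \<eta> A s])
        show "\<eta> = 4 * (mm + nn) * ln dd / \<epsilon>" using etadef by simp
        show "9600 * mm * dd\<^sup>2 * (mm + nn) ^ 4 * Cn ^ 3 / \<epsilon> ^ 3 * ln dd \<le> real K" using Kb by simp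
      qed (use mm1 cardX L0 Cp eps Kpos A_def s_def in auto)
      thus ?thesis using EQ by linarith
    qed
    have "measure_pmf.expectation (seq_pmf K p) (\<lambda>bs. cost V E X Cv Ce (Proj E X Cv Ce \<eta> (lh bs)))
        \<le> measure_pmf.expectation (seq_pmf K p) (\<lambda>bs. (cost V E X Cv Ce mu + \<epsilon> / 2 + Cn * A * s / 2) + (Cn * A / (2 * s)) * Q (lh bs))"
      using pw by (intro exp_mono[OF fs])
    also have "\<dots> = (cost V E X Cv Ce mu + \<epsilon> / 2 + Cn * A * s / 2) + (Cn * A / (2 * s)) * measure_pmf.expectation (seq_pmf K p) (\<lambda>bs. Q (lh bs))"
      by (rule exp_affine[OF fs])
    also have "\<dots> \<le> (cost V E X Cv Ce mu + \<epsilon> / 2 + Cn * A * s / 2) + (Cn * A / (2 * s)) * s\<^sup>2"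
      using EQs Cp A0 s0 by (intro add_left_mono mult_left_mono) auto
    also have "\<dots> = cost V E X Cv Ce mu + \<epsilon> / 2 + Cn * A * s"
      using s0 by (simp add: field_simps power2_eq_square)
    also have "Cn * A * s = \<epsilon> / 2" unfolding s_def using Cp A0 by simp
    finally show ?thesis unfolding lh_def by simp
  qed
qed

end

theorem theorem1:
  shows "\<exists>c::real. c > 0 \<and>
    (\<forall>(V::nat set) (E::edge set) (X::nat set) (Cv::nat \<Rightarrow> nat \<Rightarrow> real)
       (Ce::edge \<Rightarrow> nat \<Rightarrow> nat \<Rightarrow> real) (\<epsilon>::real) (K::nat).
       graph V E \<and> finite X \<and> card X \<ge> 2 \<and> \<epsilon> > 0
       \<and> real K \<ge> c * real (card E) * real (card X) ^ 2 * real (card E + card V) ^ 4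
                    * Cnorm V E X Cv Ce ^ 3 / \<epsilon> ^ 3 * ln (real (card X))
       \<longrightarrow> (let \<eta> = 4 * real (card E + card V) * ln (real (card X)) / \<epsilon> in
             rmp_guarantee V E X Cv Ce \<eta> \<epsilon> K (emp_update E X Cv Ce \<eta>) (emp_blocks E)
           \<and> rmp_guarantee V E X Cv Ce \<eta> \<epsilon> K (smp_update E X Cv Ce \<eta>) (smp_blocks V E)))"
proof (rule exI[of _ 9600], intro conjI allI impI)
  show "(0::real) < 9600" by simp
  fix V :: "nat set" and E :: "edge set" and X :: "nat set" and Cv :: "nat \<Rightarrow> nat \<Rightarrow> real"
    and Ce :: "edge \<Rightarrow> nat \<Rightarrow> nat \<Rightarrow> real" and \<epsilon> :: real and K :: nat
  assume h: "graph V E \<and> finite X \<and> card X \<ge> 2 \<and> \<epsilon> > 0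
       \<and> real K \<ge> 9600 * real (card E) * real (card X) ^ 2 * real (card E + card V) ^ 4
                    * Cnorm V E X Cv Ce ^ 3 / \<epsilon> ^ 3 * ln (real (card X))"
  define \<eta> where "\<eta> = 4 * real (card E + card V) * ln (real (card X)) / \<epsilon>"
  have g: "graph V E" using h by simp
  have Vne: "card V > 0" using g unfolding graph_def by (simp add: card_gt_0_iff)
  have etap: "\<eta> > 0" unfolding \<eta>_def using h Vne by (simp add: add_pos_nonneg)
  interpret mrf V E X Cv Ce \<eta> using g h etap by unfold_locales auto
  have Kb: "real K \<ge> 9600 * mm * dd ^ 2 * real (card E + card V) ^ 4 * Cn ^ 3 / \<epsilon> ^ 3 * ln dd"
    using h by simp
  have e: "\<epsilon> > 0" using h by simp
  show "let \<eta> = 4 * real (card E + card V) * ln (real (card X)) / \<epsilon> in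
             rmp_guarantee V E X Cv Ce \<eta> \<epsilon> K (emp_update E X Cv Ce \<eta>) (emp_blocks E)
           \<and> rmp_guarantee V E X Cv Ce \<eta> \<epsilon> K (smp_update E X Cv Ce \<eta>) (smp_blocks V E)"
    unfolding Let_def \<eta>_def[symmetric]
  proof
    show "rmp_guarantee V E X Cv Ce \<eta> \<epsilon> K (emp_update E X Cv Ce \<eta>) (emp_blocks E)"
      by (rule final_generic[OF fin_blocks emp_expected e \<eta>_def Kb])
    show "rmp_guarantee V E X Cv Ce \<eta> \<epsilon> K (smp_update E X Cv Ce \<eta>) (smp_blocks V E)"
      by (rule final_generic[OF fin_smp smp_expected e \<eta>_def Kb])
  qed
qed


end
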